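(* Let $\mathcal{U}$ be a small category and $\mathcal{A}$ a geometric prestack of small $k$-linear categories on $\mathcal{U}$. Let $\kappa$ be a cardinal with $\kappa\ge\sup\{\aleph_0,|\mathcal{U}|,|\mathcal{A}|\}$. Let $M\in\mathsf{Qch}(\mathcal{A})$ and let $X\subseteq M$ be a subset with $|X|\le\kappa$. Then there is a subobject $N\subseteq M$ in $\mathsf{Qch}(\mathcal{A})$ with $X\subseteq N$ and $|N|\le\kappa$.
   Context: $k$ is a commutative ring. A prestack $\mathcal{A}$ on $\mathcal{U}$: small $k$-linear categories $\mathcal{A}(U)$, $k$-linear functors $u^*$, coherent natural isomorphisms $c^{u,v}\colon v^*u^*\to(uv)^*$, $z^U\colon1\to(1_U)^*$. $\mathsf{Mod}(\mathfrak{a})$ = $k$-linear functors $\mathfrak{a}^{\mathrm{op}}\to\mathsf{Mod}(k)$; restriction $-\otimes_u\mathcal{A}(V)$ is the colimit preserving extension of $u^*$. $\mathsf{Qch}(\mathcal{A})$: families $M_U\in\mathsf{Mod}(\mathcal{A}(U))$ with isomorphisms $\varphi_u\colon M_U\otimes_u\mathcal{A}(V)\to M_V$ compatible with the twists induced by $c$; morphisms compatible families. Geometric: every $-\otimes_u\mathcal{A}(V)$ is exact. Cardinalities: $|\mathcal{U}|=\sum_{U,V}|\mathcal{U}(V,U)|$; for a small $k$-linear category $|\mathfrak{a}|=\sum_{A,A'}|\mathfrak{a}(A,A')|$ (cardinality of its morphism set); $|\mathcal{A}|=\sum_U|\mathcal{A}(U)|$. A subset $X\subseteq M$ consists of subsets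 $X_U(A)\subseteq M_U(A)$ for all $U$ and $A\in\mathcal{A}(U)$, and $|X|=\sum_U\sum_A|X_U(A)|$. *)

theory Defs
  imports Main
begin

abbreviation cardle :: "'a set \<Rightarrow> 'b set \<Rightarrow> bool" where
  "cardle A B \<equiv> ordLeq3 (card_of A) (card_of B)"

record ('u, 'f) smallcat =
  cOb :: "'u set"
  cHom :: "'u \<Rightarrow> 'u \<Rightarrow> 'f set"      \<comment> \<open>cHom V U = morphisms V \<rightarrow> U\<close>
  ccomp :: "'f \<Rightarrow> 'f \<Rightarrow> 'f"        \<comment> \<open>ccomp u v = u \<circ> v\<close>
  cid :: "'u \<Rightarrow> 'f"

definition is_smallcat :: "('u, 'f, 'z) smallcat_scheme \<Rightarrow> bool" where
  "is_smallcat C \<longleftrightarrow>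
     (\<forall>A\<in>cOb C. cid C A \<in> cHom C A A) \<and>
     (\<forall>A\<in>cOb C. \<forall>B\<in>cOb C. \<forall>D\<in>cOb C. \<forall>f\<in>cHom C A B. \<forall>g\<in>cHom C B D.
        ccomp C g f \<in> cHom C A D) \<and>
     (\<forall>A\<in>cOb C. \<forall>B\<in>cOb C. \<forall>f\<in>cHom C A B.
        ccomp C (cid C B) f = f \<and> ccomp C f (cid C A) = f) \<and>
     (\<forall>A\<in>cOb C. \<forall>B\<in>cOb C. \<forall>D\<in>cOb C. \<forall>E\<in>cOb C.
        \<forall>f\<in>cHom C A B. \<forall>g\<in>cHom C B D. \<forall>h\<in>cHom C D E.
        ccomp C h (ccomp C g f) = ccomp C (ccomp C h g) f)"

text \<open>Hom-sets are k-submodules of an ambient abelian group of morphisms 'h.\<close>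

record ('o, 'h, 'k) klcat =
  kOb :: "'o set"
  kHom :: "'o \<Rightarrow> 'o \<Rightarrow> 'h set"
  kcomp :: "'h \<Rightarrow> 'h \<Rightarrow> 'h"        \<comment> \<open>kcomp g f = g \<circ> f\<close>
  kid :: "'o \<Rightarrow> 'h"
  ksmult :: "'k \<Rightarrow> 'h \<Rightarrow> 'h"

definition is_klcat :: "('o, 'h::ab_group_add, 'k::comm_ring_1) klcat \<Rightarrow> bool" where
  "is_klcat C \<longleftrightarrow>
     (\<forall>A\<in>kOb C. \<forall>B\<in>kOb C.
        0 \<in> kHom C A B \<and>
        (\<forall>f\<in>kHom C A B. \<forall>g\<in>kHom C A B. f + g \<in> kHom C A B) \<and>
        (\<forall>f\<in>kHom C A B. - f \<in> kHom C A B) \<and>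
        (\<forall>c. \<forall>f\<in>kHom C A B. ksmult C c f \<in> kHom C A B) \<and>
        (\<forall>c. \<forall>f\<in>kHom C A B. \<forall>g\<in>kHom C A B. ksmult C c (f + g) = ksmult C c f + ksmult C c g) \<and>
        (\<forall>c d. \<forall>f\<in>kHom C A B. ksmult C (c + d) f = ksmult C c f + ksmult C d f) \<and>
        (\<forall>c d. \<forall>f\<in>kHom C A B. ksmult C (c * d) f = ksmult C c (ksmult C d f)) \<and>
        (\<forall>f\<in>kHom C A B. ksmult C 1 f = f)) \<and>
     (\<forall>A\<in>kOb C. kid C A \<in> kHom C A A) \<and>
     (\<forall>A\<in>kOb C. \<forall>B\<in>kOb C. \<forall>D\<in>kOb C. \<forall>f\<in>kHom C A B. \<forall>g\<in>kHom C B D.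
        kcomp C g f \<in> kHom C A D) \<and>
     (\<forall>A\<in>kOb C. \<forall>B\<in>kOb C. \<forall>f\<in>kHom C A B.
        kcomp C (kid C B) f = f \<and> kcomp C f (kid C A) = f) \<and>
     (\<forall>A\<in>kOb C. \<forall>B\<in>kOb C. \<forall>D\<in>kOb C. \<forall>E\<in>kOb C.
        \<forall>f\<in>kHom C A B. \<forall>g\<in>kHom C B D. \<forall>h\<in>kHom C D E.
        kcomp C h (kcomp C g f) = kcomp C (kcomp C h g) f) \<and>
     \<comment> \<open>k-bilinearity of composition\<close>
     (\<forall>A\<in>kOb C. \<forall>B\<in>kOb C. \<forall>D\<in>kOb C. \<forall>f\<in>kHom C A B. \<forall>f'\<in>kHom C A B.
        \<forall>g\<in>kHom C B D. \<forall>g'\<in>kHom C B D. \<forall>c.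
        kcomp C (g + g') f = kcomp C g f + kcomp C g' f \<and>
        kcomp C g (f + f') = kcomp C g f + kcomp C g f' \<and>
        kcomp C (ksmult C c g) f = ksmult C c (kcomp C g f) \<and>
        kcomp C g (ksmult C c f) = ksmult C c (kcomp C g f))"

definition k_iso :: "('o, 'h, 'k) klcat \<Rightarrow> 'o \<Rightarrow> 'o \<Rightarrow> 'h \<Rightarrow> bool" where
  "k_iso C A B f \<longleftrightarrow> f \<in> kHom C A B \<and>
     (\<exists>g\<in>kHom C B A. kcomp C g f = kid C A \<and> kcomp C f g = kid C B)"

text \<open>For u : V \<rightarrow> U: pobj P u, pmor P u give the functor u^* : A(U) \<rightarrow> A(V);
  pc P u v A = c^{u,v}_A : v^* u^* A \<rightarrow> (uv)^* A;  pz P U A = z^U_A : A \<rightarrow> (1_U)^* A.\<close>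

record ('u, 'f, 'o, 'h, 'k) prestack =
  pcat :: "'u \<Rightarrow> ('o, 'h, 'k) klcat"
  pobj :: "'f \<Rightarrow> 'o \<Rightarrow> 'o"
  pmor :: "'f \<Rightarrow> 'h \<Rightarrow> 'h"
  pc :: "'f \<Rightarrow> 'f \<Rightarrow> 'o \<Rightarrow> 'h"
  pz :: "'u \<Rightarrow> 'o \<Rightarrow> 'h"

definition is_prestack ::
  "('u, 'f) smallcat \<Rightarrow> ('u, 'f, 'o, 'h::ab_group_add, 'k::comm_ring_1) prestack \<Rightarrow> bool" where
  "is_prestack UC P \<longleftrightarrow>
     is_smallcat UC \<and>
     (\<forall>U\<in>cOb UC. is_klcat (pcat P U)) \<and>
     \<comment> \<open>u^* is a k-linear functor A(U) \<rightarrow> A(V)\<close>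
     (\<forall>U\<in>cOb UC. \<forall>V\<in>cOb UC. \<forall>u\<in>cHom UC V U.
        (\<forall>A\<in>kOb (pcat P U). pobj P u A \<in> kOb (pcat P V)) \<and>
        (\<forall>A\<in>kOb (pcat P U). \<forall>B\<in>kOb (pcat P U). \<forall>f\<in>kHom (pcat P U) A B.
            pmor P u f \<in> kHom (pcat P V) (pobj P u A) (pobj P u B)) \<and>
        (\<forall>A\<in>kOb (pcat P U). pmor P u (kid (pcat P U) A) = kid (pcat P V) (pobj P u A)) \<and>
        (\<forall>A\<in>kOb (pcat P U). \<forall>B\<in>kOb (pcat P U). \<forall>D\<in>kOb (pcat P U).
           \<forall>f\<in>kHom (pcat P U) A B. \<forall>g\<in>kHom (pcat P U) B D.
            pmor P u (kcomp (pcat P U) g f) = kcomp (pcat P V) (pmor P u g) (pmor P u f)) \<and>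
        (\<forall>A\<in>kOb (pcat P U). \<forall>B\<in>kOb (pcat P U). \<forall>f\<in>kHom (pcat P U) A B.
           \<forall>g\<in>kHom (pcat P U) A B. \<forall>c.
            pmor P u (f + g) = pmor P u f + pmor P u g \<and>
            pmor P u (ksmult (pcat P U) c f) = ksmult (pcat P V) c (pmor P u f))) \<and>
     \<comment> \<open>c^{u,v} : v^* u^* \<rightarrow> (uv)^* natural isomorphism\<close>
     (\<forall>U\<in>cOb UC. \<forall>V\<in>cOb UC. \<forall>W\<in>cOb UC. \<forall>u\<in>cHom UC V U. \<forall>v\<in>cHom UC W V.
        (\<forall>A\<in>kOb (pcat P U).
           k_iso (pcat P W) (pobj P v (pobj P u A)) (pobj P (ccomp UC u v) A) (pc P u v A)) \<and>
        (\<forall>A\<in>kOb (pcat P U). \<forall>B\<in>kOb (pcat P U). \<forall>f\<in>kHom (pcat P U) A B.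
           kcomp (pcat P W) (pc P u v B) (pmor P v (pmor P u f)) =
           kcomp (pcat P W) (pmor P (ccomp UC u v) f) (pc P u v A))) \<and>
     \<comment> \<open>z^U : 1 \<rightarrow> (1_U)^* natural isomorphism\<close>
     (\<forall>U\<in>cOb UC.
        (\<forall>A\<in>kOb (pcat P U). k_iso (pcat P U) A (pobj P (cid UC U) A) (pz P U A)) \<and>
        (\<forall>A\<in>kOb (pcat P U). \<forall>B\<in>kOb (pcat P U). \<forall>f\<in>kHom (pcat P U) A B.
           kcomp (pcat P U) (pz P U B) f = kcomp (pcat P U) (pmor P (cid UC U) f) (pz P U A))) \<and>
     \<comment> \<open>coherence (associativity)\<close>
     (\<forall>U\<in>cOb UC. \<forall>V\<in>cOb UC. \<forall>W\<in>cOb UC. \<forall>T\<in>cOb UC.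
        \<forall>u\<in>cHom UC V U. \<forall>v\<in>cHom UC W V. \<forall>w\<in>cHom UC T W. \<forall>A\<in>kOb (pcat P U).
        kcomp (pcat P T) (pc P (ccomp UC u v) w A) (pmor P w (pc P u v A)) =
        kcomp (pcat P T) (pc P u (ccomp UC v w) A) (pc P v w (pobj P u A))) \<and>
     \<comment> \<open>coherence (units)\<close>
     (\<forall>U\<in>cOb UC. \<forall>V\<in>cOb UC. \<forall>u\<in>cHom UC V U. \<forall>A\<in>kOb (pcat P U).
        kcomp (pcat P V) (pc P (cid UC U) u A) (pmor P u (pz P U A)) = kid (pcat P V) (pobj P u A) \<and>
        kcomp (pcat P V) (pc P u (cid UC V) A) (pz P V (pobj P u A)) = kid (pcat P V) (pobj P u A))"

text \<open>A module M \<in> Mod(a) is a k-linear functor a^op \<rightarrow> Mod(k): M(A) = carrier M A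
  (a k-submodule of an ambient abelian group 'm), and for f : A \<rightarrow> A' the map
  M(f) = act M f : M(A') \<rightarrow> M(A).\<close>

record ('o, 'h, 'm, 'k) kmod =
  carrier :: "'o \<Rightarrow> 'm set"
  act :: "'h \<Rightarrow> 'm \<Rightarrow> 'm"
  msmult :: "'k \<Rightarrow> 'm \<Rightarrow> 'm"

definition is_kmod ::
  "('o, 'h::ab_group_add, 'k::comm_ring_1) klcat \<Rightarrow> ('o, 'h, 'm::ab_group_add, 'k) kmod \<Rightarrow> bool" where
  "is_kmod C M \<longleftrightarrow>
     (\<forall>A\<in>kOb C.
        0 \<in> carrier M A \<and>
        (\<forall>x\<in>carrier M A. \<forall>y\<in>carrier M A. x + y \<in> carrier M A) \<and>
        (\<forall>x\<in>carrier M A. - x \<in> carrier M A) \<and>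
        (\<forall>c. \<forall>x\<in>carrier M A. msmult M c x \<in> carrier M A) \<and>
        (\<forall>c. \<forall>x\<in>carrier M A. \<forall>y\<in>carrier M A. msmult M c (x + y) = msmult M c x + msmult M c y) \<and>
        (\<forall>c d. \<forall>x\<in>carrier M A. msmult M (c + d) x = msmult M c x + msmult M d x) \<and>
        (\<forall>c d. \<forall>x\<in>carrier M A. msmult M (c * d) x = msmult M c (msmult M d x)) \<and>
        (\<forall>x\<in>carrier M A. msmult M 1 x = x)) \<and>
     (\<forall>A\<in>kOb C. \<forall>A'\<in>kOb C. \<forall>f\<in>kHom C A A'.
        (\<forall>x\<in>carrier M A'. act M f x \<in> carrier M A) \<and>
        (\<forall>x\<in>carrier M A'. \<forall>y\<in>carrier M A'. act M f (x + y) = act M f x + act M f y) \<and>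
        (\<forall>c. \<forall>x\<in>carrier M A'. act M f (msmult M c x) = msmult M c (act M f x))) \<and>
     (\<forall>A\<in>kOb C. \<forall>x\<in>carrier M A. act M (kid C A) x = x) \<and>
     (\<forall>A\<in>kOb C. \<forall>A'\<in>kOb C. \<forall>A''\<in>kOb C. \<forall>f\<in>kHom C A A'. \<forall>g\<in>kHom C A' A''.
        \<forall>x\<in>carrier M A''. act M (kcomp C g f) x = act M f (act M g x)) \<and>
     (\<forall>A\<in>kOb C. \<forall>A'\<in>kOb C. \<forall>f\<in>kHom C A A'. \<forall>g\<in>kHom C A A'. \<forall>c. \<forall>x\<in>carrier M A'.
        act M (f + g) x = act M f x + act M g x \<and>
        act M (ksmult C c f) x = msmult M c (act M f x))"

definition is_kmod_hom ::
  "('o, 'h::ab_group_add, 'k::comm_ring_1) klcat \<Rightarrow> ('o, 'h, 'm::ab_group_add, 'k) kmod \<Rightarrow>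
   ('o, 'h, 'n::ab_group_add, 'k) kmod \<Rightarrow> ('o \<Rightarrow> 'm \<Rightarrow> 'n) \<Rightarrow> bool" where
  "is_kmod_hom C M N h \<longleftrightarrow>
     (\<forall>A\<in>kOb C.
        (\<forall>x\<in>carrier M A. h A x \<in> carrier N A) \<and>
        (\<forall>x\<in>carrier M A. \<forall>y\<in>carrier M A. h A (x + y) = h A x + h A y) \<and>
        (\<forall>c. \<forall>x\<in>carrier M A. h A (msmult M c x) = msmult N c (h A x))) \<and>
     (\<forall>A\<in>kOb C. \<forall>A'\<in>kOb C. \<forall>f\<in>kHom C A A'. \<forall>x\<in>carrier M A'.
        h A (act M f x) = act N f (h A' x))"

text \<open>For u : V \<rightarrow> U and a module M over A(U), (M \<otimes>_u A(V))(B) is the coend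
  \<integral>^A M(A) \<otimes>_k A(V)(B, u^* A).  We describe it as the free k-module on triples
  (A, m, f) with m \<in> M(A), f : B \<rightarrow> u^*A (finitely supported functions to k),
  modulo the k-submodule generated by bilinearity and balancing relations.\<close>

definition tens_triples ::
  "('u, 'f, 'o, 'h, 'k) prestack \<Rightarrow> 'f \<Rightarrow> 'u \<Rightarrow> 'u \<Rightarrow> ('o, 'h, 'm, 'k) kmod \<Rightarrow> 'o \<Rightarrow>
   ('o \<times> 'm \<times> 'h) set" where
  "tens_triples P u U V M B =
     {(A, m, f). A \<in> kOb (pcat P U) \<and> m \<in> carrier M A \<and> f \<in> kHom (pcat P V) B (pobj P u A)}"

definition tens_fsums ::
  "('u, 'f, 'o, 'h, 'k::zero) prestack \<Rightarrow> 'f \<Rightarrow> 'u \<Rightarrow> 'u \<Rightarrow> ('o, 'h, 'm, 'k) kmod \<Rightarrow> 'o \<Rightarrow>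
   ('o \<times> 'm \<times> 'h \<Rightarrow> 'k) set" where
  "tens_fsums P u U V M B =
     {s. finite {t. s t \<noteq> 0} \<and> {t. s t \<noteq> 0} \<subseteq> tens_triples P u U V M B}"

definition fdelta :: "'a \<Rightarrow> 'a \<Rightarrow> 'k::zero_neq_one" where
  "fdelta t = (\<lambda>x. if x = t then 1 else 0)"

definition tens_gens ::
  "('u, 'f, 'o, 'h::ab_group_add, 'k::comm_ring_1) prestack \<Rightarrow> 'f \<Rightarrow> 'u \<Rightarrow> 'u \<Rightarrow>
   ('o, 'h, 'm::ab_group_add, 'k) kmod \<Rightarrow> 'o \<Rightarrow> ('o \<times> 'm \<times> 'h \<Rightarrow> 'k) set" where
  "tens_gens P u U V M B =
     {(\<lambda>x. fdelta (A, m + m', f) x - fdelta (A, m, f) x - fdelta (A, m', f) x) | A m m' f.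
        A \<in> kOb (pcat P U) \<and> m \<in> carrier M A \<and> m' \<in> carrier M A \<and>
        f \<in> kHom (pcat P V) B (pobj P u A)} \<union>
     {(\<lambda>x. fdelta (A, m, f + f') x - fdelta (A, m, f) x - fdelta (A, m, f') x) | A m f f'.
        A \<in> kOb (pcat P U) \<and> m \<in> carrier M A \<and>
        f \<in> kHom (pcat P V) B (pobj P u A) \<and> f' \<in> kHom (pcat P V) B (pobj P u A)} \<union>
     {(\<lambda>x. fdelta (A, msmult M c m, f) x - c * fdelta (A, m, f) x) | A m f c.
        A \<in> kOb (pcat P U) \<and> m \<in> carrier M A \<and> f \<in> kHom (pcat P V) B (pobj P u A)} \<union>
     {(\<lambda>x. fdelta (A, m, ksmult (pcat P V) c f) x - c * fdelta (A, m, f) x) | A m f c.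
        A \<in> kOb (pcat P U) \<and> m \<in> carrier M A \<and> f \<in> kHom (pcat P V) B (pobj P u A)} \<union>
     {(\<lambda>x. fdelta (A, act M a m, f) x - fdelta (A', m, kcomp (pcat P V) (pmor P u a) f) x)
        | A A' a m f.
        A \<in> kOb (pcat P U) \<and> A' \<in> kOb (pcat P U) \<and> a \<in> kHom (pcat P U) A A' \<and>
        m \<in> carrier M A' \<and> f \<in> kHom (pcat P V) B (pobj P u A)}"

inductive_set kspan :: "('a \<Rightarrow> 'k::comm_ring_1) set \<Rightarrow> ('a \<Rightarrow> 'k) set" for G where
  kspan_zero: "(\<lambda>x. 0) \<in> kspan G"
| kspan_gen: "g \<in> G \<Longrightarrow> g \<in> kspan G"
| kspan_add: "s \<in> kspan G \<Longrightarrow> r \<in> kspan G \<Longrightarrow> (\<lambda>x. s x + r x) \<in> kspan G"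
| kspan_smult: "s \<in> kspan G \<Longrightarrow> (\<lambda>x. c * s x) \<in> kspan G"

definition tens_rel ::
  "('u, 'f, 'o, 'h::ab_group_add, 'k::comm_ring_1) prestack \<Rightarrow> 'f \<Rightarrow> 'u \<Rightarrow> 'u \<Rightarrow>
   ('o, 'h, 'm::ab_group_add, 'k) kmod \<Rightarrow> 'o \<Rightarrow> ('o \<times> 'm \<times> 'h \<Rightarrow> 'k) set" where
  "tens_rel P u U V M B = kspan (tens_gens P u U V M B)"

text \<open>Push-forward of formal sums along a module morphism h (this is h \<otimes>_u A(V)).\<close>

definition tens_push :: "('o \<Rightarrow> 'm \<Rightarrow> 'n) \<Rightarrow> ('o \<times> 'm \<times> 'h \<Rightarrow> 'k::comm_ring_1) \<Rightarrow> ('o \<times> 'n \<times> 'h \<Rightarrow> 'k)" where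
  "tens_push h s = (\<lambda>(A, n, f). \<Sum>m\<in>{m. s (A, m, f) \<noteq> 0 \<and> h A m = n}. s (A, m, f))"

definition exact_at ::
  "('o, 'h, 'k) klcat \<Rightarrow> ('o, 'h, 'm, 'k) kmod \<Rightarrow> ('o, 'h, 'm::zero, 'k) kmod \<Rightarrow>
   ('o \<Rightarrow> 'm \<Rightarrow> 'm) \<Rightarrow> ('o \<Rightarrow> 'm \<Rightarrow> 'm) \<Rightarrow> bool" where
  "exact_at C Pm Qm h g \<longleftrightarrow>
     (\<forall>A\<in>kOb C. h A ` carrier Pm A = {q \<in> carrier Qm A. g A q = 0})"

text \<open>- \<otimes>_u A(V) is exact: it carries every sequence P -h-> Q -g-> S of A(U)-modules
  which is exact at Q to a sequence exact at Q \<otimes>_u A(V) (checked at every object B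
  of A(V)).  Modules are taken with elements in the type 'm given by the first argument.\<close>

definition is_geometric ::
  "('m::ab_group_add) itself \<Rightarrow> ('u, 'f) smallcat \<Rightarrow>
   ('u, 'f, 'o, 'h::ab_group_add, 'k::comm_ring_1) prestack \<Rightarrow> bool" where
  "is_geometric TYPE('m) UC P \<longleftrightarrow>
     (\<forall>U\<in>cOb UC. \<forall>V\<in>cOb UC. \<forall>u\<in>cHom UC V U.
        \<forall>(Pm :: ('o, 'h, 'm, 'k) kmod) Qm Sm h g.
          is_kmod (pcat P U) Pm \<and> is_kmod (pcat P U) Qm \<and> is_kmod (pcat P U) Sm \<and>
          is_kmod_hom (pcat P U) Pm Qm h \<and> is_kmod_hom (pcat P U) Qm Sm g \<and>
          exact_at (pcat P U) Pm Qm h g \<longrightarrow>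
          (\<forall>B\<in>kOb (pcat P V). \<forall>s\<in>tens_fsums P u U V Qm B.
             tens_push g s \<in> tens_rel P u U V Sm B \<longrightarrow>
             (\<exists>t\<in>tens_fsums P u U V Pm B.
                (\<lambda>x. tens_push h t x - s x) \<in> tens_rel P u U V Qm B)))"

text \<open>M \<in> Qch(A): modules M_U = qmod M U over A(U) together with, for u : V \<rightarrow> U, the
  A(U)-linear map qpsi M u A : M_U(A) \<rightarrow> M_V(u^* A) (the adjunct of
  \<phi>_u : M_U \<otimes>_u A(V) \<rightarrow> M_V, so that \<phi>_u(m \<otimes> f) = M_V(f)(qpsi M u A m)); \<phi>_u is required
  to be an isomorphism and to be compatible with the twists c.\<close>

record ('u, 'f, 'o, 'h, 'm, 'k) qmodule =
  qcar :: "'u \<Rightarrow> 'o \<Rightarrow> 'm set"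
  qact :: "'u \<Rightarrow> 'h \<Rightarrow> 'm \<Rightarrow> 'm"
  qsmult :: "'k \<Rightarrow> 'm \<Rightarrow> 'm"
  qpsi :: "'f \<Rightarrow> 'o \<Rightarrow> 'm \<Rightarrow> 'm"

definition qmod :: "('u, 'f, 'o, 'h, 'm, 'k) qmodule \<Rightarrow> 'u \<Rightarrow> ('o, 'h, 'm, 'k) kmod" where
  "qmod M U = \<lparr>carrier = qcar M U, act = qact M U, msmult = qsmult M\<rparr>"

text \<open>\<phi>_u applied to a formal sum \<Sum> s(A,m,f) (m \<otimes> f).\<close>

definition phi_eval ::
  "('u, 'f, 'o, 'h, 'm::ab_group_add, 'k::zero) qmodule \<Rightarrow> 'f \<Rightarrow> 'u \<Rightarrow>
   ('o \<times> 'm \<times> 'h \<Rightarrow> 'k) \<Rightarrow> 'm" where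
  "phi_eval M u V s =
     (\<Sum>t\<in>{t. s t \<noteq> 0}. case t of (A, m, f) \<Rightarrow> qsmult M (s t) (qact M V f (qpsi M u A m)))"

definition is_qch ::
  "('u, 'f) smallcat \<Rightarrow> ('u, 'f, 'o, 'h::ab_group_add, 'k::comm_ring_1) prestack \<Rightarrow>
   ('u, 'f, 'o, 'h, 'm::ab_group_add, 'k) qmodule \<Rightarrow> bool" where
  "is_qch UC P M \<longleftrightarrow>
     (\<forall>U\<in>cOb UC. is_kmod (pcat P U) (qmod M U)) \<and>
     (\<forall>U\<in>cOb UC. \<forall>V\<in>cOb UC. \<forall>u\<in>cHom UC V U.
        \<comment> \<open>qpsi M u is a morphism M_U \<rightarrow> M_V \<circ> u^* of A(U)-modules\<close>
        (\<forall>A\<in>kOb (pcat P U).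
           (\<forall>x\<in>qcar M U A. qpsi M u A x \<in> qcar M V (pobj P u A)) \<and>
           (\<forall>x\<in>qcar M U A. \<forall>y\<in>qcar M U A. qpsi M u A (x + y) = qpsi M u A x + qpsi M u A y) \<and>
           (\<forall>c. \<forall>x\<in>qcar M U A. qpsi M u A (qsmult M c x) = qsmult M c (qpsi M u A x))) \<and>
        (\<forall>A\<in>kOb (pcat P U). \<forall>A'\<in>kOb (pcat P U). \<forall>a\<in>kHom (pcat P U) A A'. \<forall>x\<in>qcar M U A'.
           qpsi M u A (qact M U a x) = qact M V (pmor P u a) (qpsi M u A' x)) \<and>
        \<comment> \<open>\<phi>_u : M_U \<otimes>_u A(V) \<rightarrow> M_V is bijective at every object B\<close>
        (\<forall>B\<in>kOb (pcat P V).
           (\<forall>y\<in>qcar M V B. \<exists>s\<in>tens_fsums P u U V (qmod M U) B. phi_eval M u V s = y) \<and>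
           (\<forall>s\<in>tens_fsums P u U V (qmod M U) B.
              phi_eval M u V s = 0 \<longrightarrow> s \<in> tens_rel P u U V (qmod M U) B))) \<and>
     \<comment> \<open>compatibility with the twists c^{u,v}\<close>
     (\<forall>U\<in>cOb UC. \<forall>V\<in>cOb UC. \<forall>W\<in>cOb UC. \<forall>u\<in>cHom UC V U. \<forall>v\<in>cHom UC W V.
        \<forall>A\<in>kOb (pcat P U). \<forall>x\<in>qcar M U A.
          qpsi M v (pobj P u A) (qpsi M u A x) =
          qact M W (pc P u v A) (qpsi M (ccomp UC u v) A x))"

definition cat_mors :: "('u, 'f) smallcat \<Rightarrow> ('u \<times> 'u \<times> 'f) set" where
  "cat_mors UC = {(V, U, f). V \<in> cOb UC \<and> U \<in> cOb UC \<and> f \<in> cHom UC V U}"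

definition prestack_mors ::
  "('u, 'f) smallcat \<Rightarrow> ('u, 'f, 'o, 'h, 'k) prestack \<Rightarrow> ('u \<times> 'o \<times> 'o \<times> 'h) set" where
  "prestack_mors UC P = {(U, A, A', f). U \<in> cOb UC \<and> A \<in> kOb (pcat P U) \<and>
      A' \<in> kOb (pcat P U) \<and> f \<in> kHom (pcat P U) A A'}"

text \<open>Elements of a family X_U(A) (disjoint union over U and A).\<close>

definition fam_elems ::
  "('u, 'f) smallcat \<Rightarrow> ('u, 'f, 'o, 'h, 'k) prestack \<Rightarrow> ('u \<Rightarrow> 'o \<Rightarrow> 'm set) \<Rightarrow> ('u \<times> 'o \<times> 'm) set" where
  "fam_elems UC P X = {(U, A, x). U \<in> cOb UC \<and> A \<in> kOb (pcat P U) \<and> x \<in> X U A}"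

end

theory Submission
  imports Defs
begin

unbundle cardinal_syntax


lemma cle_fin: "finite A \<Longrightarrow> infinite K \<Longrightarrow> |A| \<le>o |K|"
  using finite_ordLess_infinite[of "|A|" "|K|"] by (simp add: Field_card_of card_of_well_order_on ordLess_imp_ordLeq)

lemma cle_mono: "A \<subseteq> B \<Longrightarrow> |B| \<le>o |K| \<Longrightarrow> |A| \<le>o |K|"
  using card_of_mono1 ordLeq_transitive by blast

lemma cle_image: "|A| \<le>o |K| \<Longrightarrow> |f ` A| \<le>o |K|"
  using card_of_image ordLeq_transitive by blast

lemma cle_image_sub: "B \<subseteq> f ` A \<Longrightarrow> |A| \<le>o |K| \<Longrightarrow> |B| \<le>o |K|"
  using cle_image cle_mono by blast

lemma cle_times: "infinite K \<Longrightarrow> |A| \<le>o |K| \<Longrightarrow> |B| \<le>o |K| \<Longrightarrow> |A \<times> B| \<le>o |K|"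
  using card_of_Times_ordLeq_infinite_Field[of "|K|" A B] using card_of_Card_order[of K] by (simp add: Field_card_of)

lemma cle_UN: "infinite K \<Longrightarrow> |I| \<le>o |K| \<Longrightarrow> (\<And>i. i \<in> I \<Longrightarrow> card_of (A i) \<le>o |K| ) \<Longrightarrow> card_of (\<Union>i\<in>I. A i) \<le>o |K|"
  using card_of_UNION_ordLeq_infinite by blast

lemma cle_Un: "infinite K \<Longrightarrow> |A| \<le>o |K| \<Longrightarrow> |B| \<le>o |K| \<Longrightarrow> |A \<union> B| \<le>o |K|"
  using card_of_Un_ordLeq_infinite_Field[of "|K|" A B] using card_of_Card_order[of K] by (simp add: Field_card_of)

lemma cle_lists:
  assumes K: "infinite K" and A: "|A| \<le>o |K|"
  shows "|{xs. set xs \<subseteq> A}| \<le>o |K|"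
proof -
  define L where "L n = {xs. set xs \<subseteq> A \<and> length xs = n}" for n
  have "|L n| \<le>o |K|" for n
  proof (induction n)
    case 0
    have "L 0 = {[]}" by (auto simp: L_def)
    then show ?case using cle_fin[of "{[]}" K] K by simp
  next
    case (Suc n)
    have "L (Suc n) \<subseteq> (\<lambda>(a, xs). a # xs) ` (A \<times> L n)"
    proof
      fix ys assume "ys \<in> L (Suc n)"
      then obtain a xs where "ys = a # xs" "a \<in> A" "xs \<in> L n"
        by (cases ys) (auto simp: L_def)
      then show "ys \<in> (\<lambda>(a, xs). a # xs) ` (A \<times> L n)" by force
    qed
    then show ?case using cle_image_sub cle_times[OF K A Suc.IH] by blast
  qed
  moreover have "{xs. set xs \<subseteq> A} = (\<Union>n\<in>UNIV. L n)" by (auto simp: L_def)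
  moreover have "|UNIV :: nat set| \<le>o |K|"
    using K infinite_iff_card_of_nat by blast
  ultimately show ?thesis using cle_UN[OF K] by metis
qed



lemma kspan_mono: "s \<in> kspan G \<Longrightarrow> G \<subseteq> H \<Longrightarrow> s \<in> kspan H"
  by (induction rule: kspan.induct) (auto intro: kspan.intros)

lemma kspan_sum:
  assumes "finite D" "\<And>t. t \<in> D \<Longrightarrow> g t \<in> kspan G"
  shows "(\<lambda>x. \<Sum>t\<in>D. g t x) \<in> kspan G"
  using assms
proof (induction D rule: finite_induct)
  case empty then show ?case by (simp add: kspan.kspan_zero)
next
  case (insert a D)
  have "(\<lambda>x. g a x + (\<Sum>t\<in>D. g t x)) \<in> kspan G"
    using insert by (intro kspan.kspan_add) auto
  then show ?case using insert by simp
qed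

lemma kspan_diff:
  assumes "s \<in> kspan G" "r \<in> kspan G"
  shows "(\<lambda>x. s x - r x) \<in> kspan G"
proof -
  have "(\<lambda>x. (-1) * r x) \<in> kspan G" using assms(2) by (rule kspan.kspan_smult)
  then have "(\<lambda>x. s x + (-1) * r x) \<in> kspan G" using assms by (intro kspan.kspan_add)
  then show ?thesis by simp
qed

lemma kspan_ext: "s \<in> kspan G \<Longrightarrow> (\<And>x. s x = r x) \<Longrightarrow> r \<in> kspan G"
proof -
  assume "s \<in> kspan G" "\<And>x. s x = r x"
  then have "s = r" by auto
  then show ?thesis using \<open>s \<in> kspan G\<close> by simp
qed

lemma tens_gens_mono:
  assumes "act M1 = act M2" "msmult M1 = msmult M2"
    "\<And>A. A \<in> kOb (pcat P U) \<Longrightarrow> carrier M1 A \<subseteq> carrier M2 A"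
  shows "tens_gens P u U V M1 B \<subseteq> tens_gens P u U V M2 B"
  unfolding tens_gens_def assms(1,2)
  apply (intro Un_mono Collect_mono impI; elim exE conjE; intro exI conjI;
         (assumption | (rule assms(3)[THEN subsetD]; assumption)))
  done

lemma tens_rel_mono:
  assumes "act M1 = act M2" "msmult M1 = msmult M2"
    "\<And>A. A \<in> kOb (pcat P U) \<Longrightarrow> carrier M1 A \<subseteq> carrier M2 A"
  shows "tens_rel P u U V M1 B \<subseteq> tens_rel P u U V M2 B"
  unfolding tens_rel_def by (auto intro: kspan_mono[OF _ tens_gens_mono[OF assms]])

lemma tens_fsums_mono:
  assumes "\<And>A. A \<in> kOb (pcat P U) \<Longrightarrow> carrier M1 A \<subseteq> carrier M2 A"
  shows "tens_fsums P u U V M1 B \<subseteq> tens_fsums P u U V M2 B"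
proof -
  have "tens_triples P u U V M1 B \<subseteq> tens_triples P u U V M2 B"
    unfolding tens_triples_def using assms by auto
  then show ?thesis unfolding tens_fsums_def by blast
qed

definition Nof :: "('u \<times> 'o \<times> 'm) set \<Rightarrow> 'u \<Rightarrow> 'o \<Rightarrow> 'm set" where
  "Nof S U A = {x. (U, A, x) \<in> S}"

lemma qmod_upd: "qmod (M\<lparr>qcar := N\<rparr>) U = \<lparr>carrier = N U, act = qact M U, msmult = qsmult M\<rparr>"
  by (simp add: qmod_def)

lemma tens_gens_finite_support:
  assumes "g \<in> tens_gens P u U V (qmod M U) B"
  shows "\<exists>F. finite F \<and> F \<subseteq> {(U', A, m). U' = U \<and> A \<in> kOb (pcat P U) \<and> m \<in> qcar M U A} \<and>
     g \<in> tens_gens P u U V (qmod (M\<lparr>qcar := Nof F\<rparr>) U) B"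
proof -
  let ?T = "{(U', A, m). U' = U \<and> A \<in> kOb (pcat P U) \<and> m \<in> qcar M U A}"
  let ?G = "\<lambda>F. tens_gens P u U V (qmod (M\<lparr>qcar := Nof F\<rparr>) U) B"
  consider (a) A m m' f where "g = (\<lambda>x. fdelta (A, m + m', f) x - fdelta (A, m, f) x - fdelta (A, m', f) x)"
        "A \<in> kOb (pcat P U)" "m \<in> qcar M U A" "m' \<in> qcar M U A" "f \<in> kHom (pcat P V) B (pobj P u A)"
    | (b) A m f f' where "g = (\<lambda>x. fdelta (A, m, f + f') x - fdelta (A, m, f) x - fdelta (A, m, f') x)"
        "A \<in> kOb (pcat P U)" "m \<in> qcar M U A"
        "f \<in> kHom (pcat P V) B (pobj P u A)" "f' \<in> kHom (pcat P V) B (pobj P u A)"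
    | (c) A m f c where "g = (\<lambda>x. fdelta (A, qsmult M c m, f) x - c * fdelta (A, m, f) x)"
        "A \<in> kOb (pcat P U)" "m \<in> qcar M U A" "f \<in> kHom (pcat P V) B (pobj P u A)"
    | (d) A m f c where "g = (\<lambda>x. fdelta (A, m, ksmult (pcat P V) c f) x - c * fdelta (A, m, f) x)"
        "A \<in> kOb (pcat P U)" "m \<in> qcar M U A" "f \<in> kHom (pcat P V) B (pobj P u A)"
    | (e) A A' a m f where "g = (\<lambda>x. fdelta (A, qact M U a m, f) x - fdelta (A', m, kcomp (pcat P V) (pmor P u a) f) x)"
        "A \<in> kOb (pcat P U)" "A' \<in> kOb (pcat P U)" "a \<in> kHom (pcat P U) A A'"
        "m \<in> qcar M U A'" "f \<in> kHom (pcat P V) B (pobj P u A)"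
    using assms unfolding tens_gens_def qmod_def kmod.simps
    apply -
    apply (elim UnE CollectE exE conjE)
    apply (blast+)[4]
    subgoal premises p for A A' a m f
      by (rule p(5)[of A a m f A']; (rule p(6) | rule p(7) | rule p(8) | rule p(9) | rule p(10) | rule p(11)))
    done
  then show ?thesis
  proof cases
    case a
    have g: "g \<in> ?G {(U,A,m),(U,A,m')}"
      unfolding tens_gens_def qmod_upd kmod.simps a(1)
      apply (rule UnI1, rule UnI1, rule UnI1, rule UnI1)
      apply (intro CollectI exI conjI)
      apply (rule refl)
      using a by (simp_all add: Nof_def)
    show ?thesis using a by (intro exI[of _ "{(U,A,m),(U,A,m')}"] conjI g) auto
  next
    case b
    have g: "g \<in> ?G {(U,A,m)}"
      unfolding tens_gens_def qmod_upd kmod.simps b(1)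
      apply (rule UnI1, rule UnI1, rule UnI1, rule UnI2)
      apply (intro CollectI exI conjI)
      apply (rule refl)
      using b by (simp_all add: Nof_def)
    show ?thesis using b by (intro exI[of _ "{(U,A,m)}"] conjI g) auto
  next
    case c
    have g: "g \<in> ?G {(U,A,m)}"
      unfolding tens_gens_def qmod_upd kmod.simps c(1)
      apply (rule UnI1, rule UnI1, rule UnI2)
      apply (intro CollectI exI conjI)
      apply (rule refl)
      using c by (simp_all add: Nof_def)
    show ?thesis using c by (intro exI[of _ "{(U,A,m)}"] conjI g) auto
  next
    case d
    have g: "g \<in> ?G {(U,A,m)}"
      unfolding tens_gens_def qmod_upd kmod.simps d(1)
      apply (rule UnI1, rule UnI2)
      apply (intro CollectI exI conjI)
      apply (rule refl)
      using d by (simp_all add: Nof_def)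
    show ?thesis using d by (intro exI[of _ "{(U,A,m)}"] conjI g) auto
  next
    case e
    have g: "g \<in> ?G {(U,A',m)}"
      unfolding tens_gens_def qmod_upd kmod.simps e(1)
      apply (rule UnI2)
      apply (intro CollectI exI conjI)
      apply (rule refl)
      using e by (simp_all add: Nof_def)
    show ?thesis using e by (intro exI[of _ "{(U,A',m)}"] conjI g) auto
  qed
qed

lemma tens_rel_finite_support:
  assumes "s \<in> tens_rel P u U V (qmod M U) B"
  shows "\<exists>F. finite F \<and> F \<subseteq> {(U', A, m). U' = U \<and> A \<in> kOb (pcat P U) \<and> m \<in> qcar M U A} \<and>
     s \<in> tens_rel P u U V (qmod (M\<lparr>qcar := Nof F\<rparr>) U) B"
  using assms unfolding tens_rel_def
proof (induction rule: kspan.induct)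
  case kspan_zero
  show ?case by (intro exI[of _ "{}"] conjI kspan.kspan_zero) simp_all
next
  case (kspan_gen g)
  from tens_gens_finite_support[OF kspan_gen] obtain F where F: "finite F"
    "F \<subseteq> {(U', A, m). U' = U \<and> A \<in> kOb (pcat P U) \<and> m \<in> qcar M U A}"
    "g \<in> tens_gens P u U V (qmod (M\<lparr>qcar := Nof F\<rparr>) U) B" by blast
  show ?case by (intro exI[of _ F] conjI F(1) F(2) kspan.kspan_gen F(3))
next
  case (kspan_add s r)
  from kspan_add.IH obtain F1 where F1: "finite F1" "F1 \<subseteq> {(U', A, m). U' = U \<and> A \<in> kOb (pcat P U) \<and> m \<in> qcar M U A}"
    "s \<in> kspan (tens_gens P u U V (qmod (M\<lparr>qcar := Nof F1\<rparr>) U) B)" by blast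
  from kspan_add.IH obtain F2 where F2: "finite F2" "F2 \<subseteq> {(U', A, m). U' = U \<and> A \<in> kOb (pcat P U) \<and> m \<in> qcar M U A}"
    "r \<in> kspan (tens_gens P u U V (qmod (M\<lparr>qcar := Nof F2\<rparr>) U) B)" by blast
  have m1: "tens_gens P u U V (qmod (M\<lparr>qcar := Nof F1\<rparr>) U) B \<subseteq> tens_gens P u U V (qmod (M\<lparr>qcar := Nof (F1 \<union> F2)\<rparr>) U) B"
    by (rule tens_gens_mono) (auto simp: qmod_upd Nof_def)
  have m2: "tens_gens P u U V (qmod (M\<lparr>qcar := Nof F2\<rparr>) U) B \<subseteq> tens_gens P u U V (qmod (M\<lparr>qcar := Nof (F1 \<union> F2)\<rparr>) U) B"
    by (rule tens_gens_mono) (auto simp: qmod_upd Nof_def)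
  have fin: "finite (F1 \<union> F2)" using F1(1) F2(1) by simp
  have sub: "F1 \<union> F2 \<subseteq> {(U', A, m). U' = U \<and> A \<in> kOb (pcat P U) \<and> m \<in> qcar M U A}"
    using F1(2) F2(2) by (rule Un_least)
  show ?case
    by (intro exI[of _ "F1 \<union> F2"] conjI fin sub kspan.kspan_add kspan_mono[OF F1(3) m1] kspan_mono[OF F2(3) m2])
next
  case (kspan_smult s c)
  from kspan_smult.IH obtain F where F: "finite F"
    "F \<subseteq> {(U', A, m). U' = U \<and> A \<in> kOb (pcat P U) \<and> m \<in> qcar M U A}"
    "s \<in> kspan (tens_gens P u U V (qmod (M\<lparr>qcar := Nof F\<rparr>) U) B)" by blast
  show ?case by (intro exI[of _ F] conjI F(1) F(2) kspan.kspan_smult F(3))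
qed



lemma kmod_zero: "is_kmod C Mm \<Longrightarrow> A \<in> kOb C \<Longrightarrow> 0 \<in> carrier Mm A"
  by (simp add: is_kmod_def)
lemma kmod_add: "is_kmod C Mm \<Longrightarrow> A \<in> kOb C \<Longrightarrow> x \<in> carrier Mm A \<Longrightarrow> y \<in> carrier Mm A \<Longrightarrow> x + y \<in> carrier Mm A"
  by (simp add: is_kmod_def)
lemma kmod_neg: "is_kmod C Mm \<Longrightarrow> A \<in> kOb C \<Longrightarrow> x \<in> carrier Mm A \<Longrightarrow> - x \<in> carrier Mm A"
  by (simp add: is_kmod_def)

lemma kmod_act:
  assumes "is_kmod C Mm" "A \<in> kOb C" "A' \<in> kOb C" "f \<in> kHom C A A'" "x \<in> carrier Mm A'"
  shows "act Mm f x \<in> carrier Mm A"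
  using assms by (simp add: is_kmod_def)

lemma kmod_smult_act:
  assumes "is_kmod C Mm" "A \<in> kOb C" "x \<in> carrier Mm A" "is_klcat C"
  shows "act Mm (ksmult C c (kid C A)) x = msmult Mm c x"
proof -
  have id: "kid C A \<in> kHom C A A" using assms(4,2) by (simp add: is_klcat_def)
  have "act Mm (ksmult C c (kid C A)) x = msmult Mm c (act Mm (kid C A) x)"
    using assms(1) id assms(2,3) by (simp add: is_kmod_def)
  also have "act Mm (kid C A) x = x" using assms(1-3) by (simp add: is_kmod_def)
  finally show ?thesis .
qed

lemma klcat_kid: "is_klcat C \<Longrightarrow> A \<in> kOb C \<Longrightarrow> kid C A \<in> kHom C A A"
  by (simp add: is_klcat_def)

lemma klcat_smult: "is_klcat C \<Longrightarrow> A \<in> kOb C \<Longrightarrow> B \<in> kOb C \<Longrightarrow> f \<in> kHom C A B \<Longrightarrow> ksmult C c f \<in> kHom C A B"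
  by (simp add: is_klcat_def)



locale qsetup =
  fixes UC :: "('u, 'f) smallcat"
    and P :: "('u, 'f, 'o, 'h::ab_group_add, 'k::comm_ring_1) prestack"
    and M :: "('u, 'f, 'o, 'h, 'm::ab_group_add, 'k) qmodule"
    and K :: "'c set"
  assumes prestack: "is_prestack UC P"
    and Mq: "is_qch UC P M"
    and Kinf: "infinite K"
    and kU: "cardle (cat_mors UC) K"
    and kA: "cardle (prestack_mors UC P) K"
begin

lemma klcatU: "U \<in> cOb UC \<Longrightarrow> is_klcat (pcat P U)"
  using prestack by (simp add: is_prestack_def)

lemma pobj_ob: "U \<in> cOb UC \<Longrightarrow> V \<in> cOb UC \<Longrightarrow> u \<in> cHom UC V U \<Longrightarrow> A \<in> kOb (pcat P U) \<Longrightarrow>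
   pobj P u A \<in> kOb (pcat P V)"
  using prestack by (simp add: is_prestack_def)

lemma kmodM: "U \<in> cOb UC \<Longrightarrow> is_kmod (pcat P U) (qmod M U)"
  using Mq by (simp add: is_qch_def)

lemma psi_mem: "U \<in> cOb UC \<Longrightarrow> V \<in> cOb UC \<Longrightarrow> u \<in> cHom UC V U \<Longrightarrow> A \<in> kOb (pcat P U) \<Longrightarrow>
   x \<in> qcar M U A \<Longrightarrow> qpsi M u A x \<in> qcar M V (pobj P u A)"
  using Mq by (simp add: is_qch_def)

lemma surjM: "U \<in> cOb UC \<Longrightarrow> V \<in> cOb UC \<Longrightarrow> u \<in> cHom UC V U \<Longrightarrow> B \<in> kOb (pcat P V) \<Longrightarrow>
   y \<in> qcar M V B \<Longrightarrow> \<exists>s\<in>tens_fsums P u U V (qmod M U) B. phi_eval M u V s = y"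
  using Mq by (simp add: is_qch_def)

lemma injM: "U \<in> cOb UC \<Longrightarrow> V \<in> cOb UC \<Longrightarrow> u \<in> cHom UC V U \<Longrightarrow> B \<in> kOb (pcat P V) \<Longrightarrow>
   s \<in> tens_fsums P u U V (qmod M U) B \<Longrightarrow> phi_eval M u V s = 0 \<Longrightarrow> s \<in> tens_rel P u U V (qmod M U) B"
  using Mq by (simp add: is_qch_def)

end


definition cnt :: "'a list \<Rightarrow> 'a \<Rightarrow> 'k::comm_ring_1" where
  "cnt xs = (\<lambda>x. of_nat (count_list xs x))"

context qsetup begin

definition Mt where "Mt = {(U, A, x). U \<in> cOb UC \<and> A \<in> kOb (pcat P U) \<and> x \<in> qcar M U A}"

definition sw where
  "sw V U u B y = (SOME s. s \<in> tens_fsums P u U V (qmod M U) B \<and> phi_eval M u V s = y)"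

definition IF where
  "IF U u V B xs = (SOME F. finite F \<and> F \<subseteq> {(U', A, m). U' = U \<and> A \<in> kOb (pcat P U) \<and> m \<in> qcar M U A} \<and>
      cnt xs \<in> tens_rel P u U V (qmod (M\<lparr>qcar := Nof F\<rparr>) U) B)"

definition JS where
  "JS S = {((V, U, u), B, xs). (V, U, u) \<in> cat_mors UC \<and> B \<in> kOb (pcat P V) \<and>
      set xs \<subseteq> tens_triples P u U V (qmod (M\<lparr>qcar := Nof S\<rparr>) U) B \<and>
      cnt xs \<in> tens_rel P u U V (qmod M U) B}"

definition step where
  "step S = S \<union> {(U, A, x + y) | U A x y. (U, A, x) \<in> S \<and> (U, A, y) \<in> S}
     \<union> {(U, A, - x) | U A x. (U, A, x) \<in> S}
     \<union> {(U, A, 0) | U A. U \<in> cOb UC \<and> A \<in> kOb (pcat P U)}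
     \<union> {(U, A, qact M U f x) | U A A' f x. (U, A, A', f) \<in> prestack_mors UC P \<and> (U, A', x) \<in> S}
     \<union> {(V, pobj P u A, qpsi M u A x) | V U u A x. (V, U, u) \<in> cat_mors UC \<and> (U, A, x) \<in> S}
     \<union> \<Union>((\<lambda>((V, U, u), (V', B, y)). if V = V' then {(U, A, m) | A m f. sw V U u B y (A, m, f) \<noteq> 0} else {})
           ` (cat_mors UC \<times> S))
     \<union> \<Union>((\<lambda>((V, U, u), B, xs). IF U u V B xs) ` JS S)"

lemma step_S: "t \<in> S \<Longrightarrow> t \<in> step S"
  unfolding step_def by (rule UnI1, rule UnI1, rule UnI1, rule UnI1, rule UnI1, rule UnI1, rule UnI1)

lemma step_add: "(U, A, x) \<in> S \<Longrightarrow> (U, A, y) \<in> S \<Longrightarrow> (U, A, x + y) \<in> step S"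
  unfolding step_def
  apply (rule UnI1, rule UnI1, rule UnI1, rule UnI1, rule UnI1, rule UnI1, rule UnI2)
  apply (intro CollectI exI conjI, rule refl)
  by assumption+

lemma step_neg: "(U, A, x) \<in> S \<Longrightarrow> (U, A, - x) \<in> step S"
  unfolding step_def
  apply (rule UnI1, rule UnI1, rule UnI1, rule UnI1, rule UnI1, rule UnI2)
  apply (intro CollectI exI conjI, rule refl)
  by assumption+

lemma step_zero: "U \<in> cOb UC \<Longrightarrow> A \<in> kOb (pcat P U) \<Longrightarrow> (U, A, 0) \<in> step S"
  unfolding step_def
  apply (rule UnI1, rule UnI1, rule UnI1, rule UnI1, rule UnI2)
  apply (intro CollectI exI conjI, rule refl)
  by assumption+

lemma step_act: "(U, A, A', f) \<in> prestack_mors UC P \<Longrightarrow> (U, A', x) \<in> S \<Longrightarrow> (U, A, qact M U f x) \<in> step S"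
  unfolding step_def
  apply (rule UnI1, rule UnI1, rule UnI1, rule UnI2)
  apply (intro CollectI exI conjI, rule refl)
  by assumption+

lemma step_psi: "(V, U, u) \<in> cat_mors UC \<Longrightarrow> (U, A, x) \<in> S \<Longrightarrow> (V, pobj P u A, qpsi M u A x) \<in> step S"
  unfolding step_def
  apply (rule UnI1, rule UnI1, rule UnI2)
  apply (intro CollectI exI conjI, rule refl)
  by assumption+

lemma step_surj: "(V, U, u) \<in> cat_mors UC \<Longrightarrow> (V, B, y) \<in> S \<Longrightarrow> sw V U u B y (A, m, f) \<noteq> 0 \<Longrightarrow>
    (U, A, m) \<in> step S"
  unfolding step_def
  apply (rule UnI1, rule UnI2)
  apply (rule UnionI[OF imageI[where x="((V, U, u), (V, B, y))"]])
   apply (rule SigmaI, assumption, assumption)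
  apply (simp only: prod.case)
  apply (subst if_P[OF refl])
  apply (intro CollectI exI conjI, rule refl)
  by assumption

lemma step_inj: "((V, U, u), B, xs) \<in> JS S \<Longrightarrow> t \<in> IF U u V B xs \<Longrightarrow> t \<in> step S"
  unfolding step_def
  apply (rule UnI2)
  apply (rule UnionI[OF imageI[where x="((V, U, u), B, xs)"]])
   apply assumption
  apply (simp only: prod.case)
  done

end


context qsetup begin

lemma cat_morsD: "(V, U, u) \<in> cat_mors UC \<Longrightarrow> V \<in> cOb UC \<and> U \<in> cOb UC \<and> u \<in> cHom UC V U"
  by (simp add: cat_mors_def)

lemma prestack_morsD: "(U, A, A', f) \<in> prestack_mors UC P \<Longrightarrow>
   U \<in> cOb UC \<and> A \<in> kOb (pcat P U) \<and> A' \<in> kOb (pcat P U) \<and> f \<in> kHom (pcat P U) A A'"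
  by (simp add: prestack_mors_def)

lemma MtD: "(U, A, x) \<in> Mt \<Longrightarrow> U \<in> cOb UC \<and> A \<in> kOb (pcat P U) \<and> x \<in> qcar M U A"
  by (simp add: Mt_def)

lemma MtI: "U \<in> cOb UC \<Longrightarrow> A \<in> kOb (pcat P U) \<Longrightarrow> x \<in> qcar M U A \<Longrightarrow> (U, A, x) \<in> Mt"
  by (simp add: Mt_def)

lemma sw_spec:
  assumes "(V, U, u) \<in> cat_mors UC" "(V, B, y) \<in> Mt"
  shows "sw V U u B y \<in> tens_fsums P u U V (qmod M U) B \<and> phi_eval M u V (sw V U u B y) = y"
proof -
  have "\<exists>s\<in>tens_fsums P u U V (qmod M U) B. phi_eval M u V s = y"
    using cat_morsD[OF assms(1)] MtD[OF assms(2)] by (intro surjM) auto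
  then have "\<exists>s. s \<in> tens_fsums P u U V (qmod M U) B \<and> phi_eval M u V s = y" by (simp only: Bex_def)
  then show ?thesis unfolding sw_def by (rule someI_ex)
qed

lemma IF_spec:
  assumes "cnt xs \<in> tens_rel P u U V (qmod M U) B"
  shows "finite (IF U u V B xs) \<and>
     IF U u V B xs \<subseteq> {(U', A, m). U' = U \<and> A \<in> kOb (pcat P U) \<and> m \<in> qcar M U A} \<and>
     cnt xs \<in> tens_rel P u U V (qmod (M\<lparr>qcar := Nof (IF U u V B xs)\<rparr>) U) B"
  unfolding IF_def by (rule someI_ex) (rule tens_rel_finite_support[OF assms])

lemma step_E:
  assumes "t \<in> step S"
  obtains (S) "t \<in> S"
  | (add) U A x y where "t = (U, A, x + y)" "(U, A, x) \<in> S" "(U, A, y) \<in> S"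
  | (neg) U A x where "t = (U, A, - x)" "(U, A, x) \<in> S"
  | (zero) U A where "t = (U, A, 0)" "U \<in> cOb UC" "A \<in> kOb (pcat P U)"
  | (act) U A A' f x where "t = (U, A, qact M U f x)" "(U, A, A', f) \<in> prestack_mors UC P" "(U, A', x) \<in> S"
  | (psi) V U u A x where "t = (V, pobj P u A, qpsi M u A x)" "(V, U, u) \<in> cat_mors UC" "(U, A, x) \<in> S"
  | (surj) V U u B y A m f where "t = (U, A, m)" "(V, U, u) \<in> cat_mors UC" "(V, B, y) \<in> S"
       "sw V U u B y (A, m, f) \<noteq> 0"
  | (inj) V U u B xs where "((V, U, u), B, xs) \<in> JS S" "t \<in> IF U u V B xs"
  using assms unfolding step_def
  apply -
  apply (elim UnE)
  subgoal by blast
  subgoal by blast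
  subgoal by blast
  subgoal by blast
  subgoal by blast
  subgoal by blast
  subgoal premises p
    using p(9) apply (elim UnionE imageE SigmaE)
    apply (simp split: if_splits prod.splits)
    using p(7) by blast
  subgoal premises p
    using p(9) apply (elim UnionE imageE)
    apply (simp split: prod.splits)
    using p(8) by blast
  done

end


lemma qmod_simps[simp]: "carrier (qmod M U) = qcar M U" "act (qmod M U) = qact M U" "msmult (qmod M U) = qsmult M"
  by (simp_all add: qmod_def)

context qsetup begin

lemma step_Mt:
  assumes SM: "S \<subseteq> Mt"
  shows "step S \<subseteq> Mt"
proof
  fix t assume "t \<in> step S"
  then show "t \<in> Mt"
  proof (cases rule: step_E)
    case S then show ?thesis using SM by blast
  next
    case (add U A x y)
    have x: "U \<in> cOb UC \<and> A \<in> kOb (pcat P U) \<and> x \<in> qcar M U A" using add SM MtD by blast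
    have y: "y \<in> qcar M U A" using add SM MtD by blast
    have "x + y \<in> qcar M U A" using kmod_add[OF kmodM, of U A x y] x y by simp
    then show ?thesis using add x MtI by blast
  next
    case (neg U A x)
    have x: "U \<in> cOb UC \<and> A \<in> kOb (pcat P U) \<and> x \<in> qcar M U A" using neg SM MtD by blast
    have "- x \<in> qcar M U A" using kmod_neg[OF kmodM, of U A x] x by simp
    then show ?thesis using neg x MtI by blast
  next
    case (zero U A)
    have "0 \<in> qcar M U A" using kmod_zero[OF kmodM, of U A] zero by simp
    then show ?thesis using zero MtI by blast
  next
    case (act U A A' f x)
    have pm: "U \<in> cOb UC \<and> A \<in> kOb (pcat P U) \<and> A' \<in> kOb (pcat P U) \<and> f \<in> kHom (pcat P U) A A'"
      using prestack_morsD[OF act(2)] .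
    have x: "x \<in> qcar M U A'" using act SM MtD by blast
    have "qact M U f x \<in> qcar M U A" using kmod_act[OF kmodM, of U A A' f x] pm x by simp
    then show ?thesis using act pm MtI by blast
  next
    case (psi V U u A x)
    have cm: "V \<in> cOb UC \<and> U \<in> cOb UC \<and> u \<in> cHom UC V U" using cat_morsD[OF psi(2)] .
    have x: "A \<in> kOb (pcat P U) \<and> x \<in> qcar M U A" using psi SM MtD by blast
    have "qpsi M u A x \<in> qcar M V (pobj P u A)" using psi_mem cm x by blast
    moreover have "pobj P u A \<in> kOb (pcat P V)" using pobj_ob cm x by blast
    ultimately show ?thesis using psi cm MtI by blast
  next
    case (surj V U u B y A m f)
    have cm: "V \<in> cOb UC \<and> U \<in> cOb UC \<and> u \<in> cHom UC V U" using cat_morsD[OF surj(2)] .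
    have yM: "(V, B, y) \<in> Mt" using surj SM by blast
    have "sw V U u B y \<in> tens_fsums P u U V (qmod M U) B" using sw_spec[OF surj(2) yM] by blast
    then have "(A, m, f) \<in> tens_triples P u U V (qmod M U) B"
      using surj(4) unfolding tens_fsums_def by blast
    then have "A \<in> kOb (pcat P U) \<and> m \<in> qcar M U A" unfolding tens_triples_def by simp
    then show ?thesis using surj cm MtI by blast
  next
    case (inj V U u B xs)
    have J: "(V, U, u) \<in> cat_mors UC" "cnt xs \<in> tens_rel P u U V (qmod M U) B"
      using inj(1) unfolding JS_def by simp_all
    have cm: "V \<in> cOb UC \<and> U \<in> cOb UC \<and> u \<in> cHom UC V U" using cat_morsD[OF J(1)] .
    have "IF U u V B xs \<subseteq> {(U', A, m). U' = U \<and> A \<in> kOb (pcat P U) \<and> m \<in> qcar M U A}"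
      using IF_spec[OF J(2)] by blast
    then have "t \<in> {(U', A, m). U' = U \<and> A \<in> kOb (pcat P U) \<and> m \<in> qcar M U A}" using inj(2) by blast
    then show ?thesis using cm unfolding Mt_def by auto
  qed
qed

end


context qsetup begin

lemma JS_card:
  assumes SM: "S \<subseteq> Mt" and SK: "cardle S K"
  shows "cardle (JS S) K"
proof -
  define Obs where "Obs = (\<lambda>(U, A, A', f). A) ` prestack_mors UC P"
  define Trip where "Trip = (\<lambda>((U, A, m), (V, B, A', f)). (A, m, f)) ` (S \<times> prestack_mors UC P)"
  have "JS S \<subseteq> cat_mors UC \<times> (Obs \<times> {xs. set xs \<subseteq> Trip})"
  proof
    fix j assume j: "j \<in> JS S"
    obtain V U u B xs where jj: "j = ((V, U, u), B, xs)" by (cases j) auto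
    have J: "(V, U, u) \<in> cat_mors UC" "B \<in> kOb (pcat P V)"
      "set xs \<subseteq> tens_triples P u U V (qmod (M\<lparr>qcar := Nof S\<rparr>) U) B"
      using j unfolding jj JS_def by simp_all
    have cm: "V \<in> cOb UC \<and> U \<in> cOb UC \<and> u \<in> cHom UC V U" using cat_morsD[OF J(1)] .
    have "(V, B, B, kid (pcat P V) B) \<in> prestack_mors UC P"
      using cm J(2) klcat_kid[OF klcatU] unfolding prestack_mors_def by simp
    then have B: "B \<in> Obs" unfolding Obs_def by (rule image_eqI[rotated]) simp
    have "set xs \<subseteq> Trip"
    proof
      fix t assume "t \<in> set xs"
      then have "t \<in> tens_triples P u U V (qmod (M\<lparr>qcar := Nof S\<rparr>) U) B" using J(3) by blast
      then obtain A m f where t: "t = (A, m, f)" "A \<in> kOb (pcat P U)" "(U, A, m) \<in> S"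
        "f \<in> kHom (pcat P V) B (pobj P u A)"
        unfolding tens_triples_def qmod_upd Nof_def by auto
      have "pobj P u A \<in> kOb (pcat P V)" using pobj_ob cm t(2) by blast
      then have "(V, B, pobj P u A, f) \<in> prestack_mors UC P"
        using cm J(2) t(4) unfolding prestack_mors_def by simp
      then show "t \<in> Trip" unfolding Trip_def
        by (rule image_eqI[rotated, OF SigmaI[OF t(3)]]) (simp add: t(1))
    qed
    then show "j \<in> cat_mors UC \<times> (Obs \<times> {xs. set xs \<subseteq> Trip})" using jj J(1) B by simp
  qed
  moreover have "cardle Obs K" unfolding Obs_def using cle_image kA by blast
  moreover have "cardle Trip K" unfolding Trip_def using cle_image cle_times[OF Kinf SK kA] by blast
  ultimately show ?thesis
    using cle_mono cle_times[OF Kinf kU cle_times[OF Kinf _ cle_lists[OF Kinf]]] by blast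
qed

lemma step_card:
  assumes SM: "S \<subseteq> Mt" and SK: "cardle S K"
  shows "cardle (step S) K"
proof -
  have c1: "cardle {(U, A, x + y) | U A x y. (U, A, x) \<in> S \<and> (U, A, y) \<in> S} K"
  proof (rule cle_image_sub[OF _ cle_times[OF Kinf SK SK]])
    show "{(U, A, x + y) | U A x y. (U, A, x) \<in> S \<and> (U, A, y) \<in> S} \<subseteq>
      (\<lambda>((U, A, x), (U', A', y)). (U, A, x + y)) ` (S \<times> S)" by force
  qed
  have c2: "cardle {(U, A, - x) | U A x. (U, A, x) \<in> S} K"
  proof (rule cle_image_sub[OF _ SK])
    show "{(U, A, - x) | U A x. (U, A, x) \<in> S} \<subseteq> (\<lambda>(U, A, x). (U, A, - x)) ` S" by force
  qed
  have c3: "cardle {(U, A, 0) | U A. U \<in> cOb UC \<and> A \<in> kOb (pcat P U)} K"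
  proof (rule cle_image_sub[OF _ kA])
    show "{(U, A, 0) | U A. U \<in> cOb UC \<and> A \<in> kOb (pcat P U)} \<subseteq> (\<lambda>(U, A, A', f). (U, A, 0)) ` prestack_mors UC P"
    proof
      fix t assume "t \<in> {(U, A, 0) | U A. U \<in> cOb UC \<and> A \<in> kOb (pcat P U)}"
      then obtain U A where t: "t = (U, A, 0)" "U \<in> cOb UC" "A \<in> kOb (pcat P U)" by blast
      have "(U, A, A, kid (pcat P U) A) \<in> prestack_mors UC P"
        using t klcat_kid[OF klcatU] unfolding prestack_mors_def by simp
      then show "t \<in> (\<lambda>(U, A, A', f). (U, A, 0)) ` prestack_mors UC P"
        by (rule image_eqI[rotated]) (simp add: t(1))
    qed
  qed
  have c4: "cardle {(U, A, qact M U f x) | U A A' f x. (U, A, A', f) \<in> prestack_mors UC P \<and> (U, A', x) \<in> S} K"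
  proof (rule cle_image_sub[OF _ cle_times[OF Kinf kA SK]])
    show "{(U, A, qact M U f x) | U A A' f x. (U, A, A', f) \<in> prestack_mors UC P \<and> (U, A', x) \<in> S} \<subseteq>
      (\<lambda>((U, A, A', f), (U', A'', x)). (U, A, qact M U f x)) ` (prestack_mors UC P \<times> S)" by force
  qed
  have c5: "cardle {(V, pobj P u A, qpsi M u A x) | V U u A x. (V, U, u) \<in> cat_mors UC \<and> (U, A, x) \<in> S} K"
  proof (rule cle_image_sub[OF _ cle_times[OF Kinf kU SK]])
    show "{(V, pobj P u A, qpsi M u A x) | V U u A x. (V, U, u) \<in> cat_mors UC \<and> (U, A, x) \<in> S} \<subseteq>
      (\<lambda>((V, U, u), (U', A, x)). (V, pobj P u A, qpsi M u A x)) ` (cat_mors UC \<times> S)" by force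
  qed
  have c6: "cardle (\<Union>((\<lambda>((V, U, u), (V', B, y)). if V = V' then {(U, A, m) | A m f. sw V U u B y (A, m, f) \<noteq> 0} else {})
           ` (cat_mors UC \<times> S))) K"
    unfolding image_image[symmetric]
  proof (rule cle_UN[OF Kinf cle_times[OF Kinf kU SK]])
    fix i assume i: "i \<in> cat_mors UC \<times> S"
    obtain V U u V' B y where ii: "i = ((V, U, u), (V', B, y))" by (cases i) auto
    have fin: "finite ((\<lambda>((V, U, u), (V', B, y)). if V = V' then {(U, A, m) | A m f. sw V U u B y (A, m, f) \<noteq> 0} else {}) i)"
    proof (cases "V = V'")
      case True
      have yM: "(V, B, y) \<in> Mt" using i ii True SM by auto
      have cm: "(V, U, u) \<in> cat_mors UC" using i ii by auto
      have "finite {t. sw V U u B y t \<noteq> 0}"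
        using sw_spec[OF cm yM] unfolding tens_fsums_def by blast
      then have "finite ((\<lambda>(A, m, f). (U, A, m)) ` {t. sw V U u B y t \<noteq> 0})" by simp
      moreover have "{(U, A, m) | A m f. sw V U u B y (A, m, f) \<noteq> 0} \<subseteq> (\<lambda>(A, m, f). (U, A, m)) ` {t. sw V U u B y t \<noteq> 0}"
        by force
      ultimately show ?thesis using ii True finite_subset by auto
    next
      case False then show ?thesis using ii by simp
    qed
    show "cardle ((\<lambda>((V, U, u), (V', B, y)). if V = V' then {(U, A, m) | A m f. sw V U u B y (A, m, f) \<noteq> 0} else {}) i) K"
      using cle_fin[OF fin Kinf] .
  qed
  have c7: "cardle (\<Union>((\<lambda>((V, U, u), B, xs). IF U u V B xs) ` JS S)) K"
  proof (rule cle_UN[OF Kinf JS_card[OF SM SK]])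
    fix i assume i: "i \<in> JS S"
    obtain V U u B xs where ii: "i = ((V, U, u), B, xs)" by (cases i) auto
    have "cnt xs \<in> tens_rel P u U V (qmod M U) B" using i unfolding ii JS_def by simp
    then have "finite (IF U u V B xs)" using IF_spec by blast
    then show "cardle ((\<lambda>((V, U, u), B, xs). IF U u V B xs) i) K" using cle_fin[OF _ Kinf] ii by simp
  qed
  show ?thesis unfolding step_def
    by (intro cle_Un[OF Kinf] SK c1 c2 c3 c4 c5 c6 c7)
qed

end


lemma finite_in_chain:
  assumes "finite F" "F \<subseteq> (\<Union>n. C n)" "\<And>m n. m \<le> n \<Longrightarrow> C m \<subseteq> (C n :: 'a set)" and "C = (C :: nat \<Rightarrow> 'a set)"
  shows "\<exists>n. F \<subseteq> C n"
  using assms(1,2)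
proof (induction F rule: finite_induct)
  case empty then show ?case by blast
next
  case (insert a F)
  then obtain n where n: "F \<subseteq> C n" by blast
  from insert(4) obtain m where m: "a \<in> C m" by blast
  have "F \<subseteq> C (max m n)" using n assms(3)[of n "max m n", OF max.cobounded2] by (rule subset_trans)
  moreover have "a \<in> C (max m n)" using m assms(3)[of m "max m n", OF max.cobounded1] by (rule subsetD[rotated])
  ultimately show ?case by blast
qed

context qsetup begin

definition Cn where "Cn S0 n = (step ^^ n) S0"
definition Sw where "Sw S0 = (\<Union>n. Cn S0 n)"

lemma Cn_Suc: "Cn S0 (Suc n) = step (Cn S0 n)"
  by (simp add: Cn_def)

lemma Cn_mono: "m \<le> n \<Longrightarrow> Cn S0 m \<subseteq> Cn S0 n"
proof (induction n)
  case 0 then show ?case by simp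
next
  case (Suc n)
  show ?case
  proof (cases "m = Suc n")
    case True then show ?thesis by simp
  next
    case False
    then have "Cn S0 m \<subseteq> Cn S0 n" using Suc by simp
    also have "\<dots> \<subseteq> Cn S0 (Suc n)" unfolding Cn_Suc using step_S by blast
    finally show ?thesis .
  qed
qed

lemma Cn_Mt: "S0 \<subseteq> Mt \<Longrightarrow> Cn S0 n \<subseteq> Mt"
  by (induction n) (simp_all add: Cn_def step_Mt)

lemma Cn_card: "S0 \<subseteq> Mt \<Longrightarrow> cardle S0 K \<Longrightarrow> cardle (Cn S0 n) K"
proof (induction n)
  case 0 then show ?case by (simp add: Cn_def)
next
  case (Suc n)
  then show ?case unfolding Cn_Suc using step_card Cn_Mt by blast
qed

lemma Sw_Mt: "S0 \<subseteq> Mt \<Longrightarrow> Sw S0 \<subseteq> Mt"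
  unfolding Sw_def using Cn_Mt by blast

lemma Sw_card: "S0 \<subseteq> Mt \<Longrightarrow> cardle S0 K \<Longrightarrow> cardle (Sw S0) K"
proof -
  assume a: "S0 \<subseteq> Mt" "cardle S0 K"
  have nat: "cardle (UNIV :: nat set) K" using Kinf infinite_iff_card_of_nat by blast
  show ?thesis unfolding Sw_def
    by (rule cle_UN[OF Kinf nat]) (rule Cn_card[OF a])
qed

lemma S0_Sw: "S0 \<subseteq> Sw S0"
proof -
  have "Cn S0 0 = S0" by (simp add: Cn_def)
  then show ?thesis unfolding Sw_def by blast
qed

lemma Sw_fin: "finite F \<Longrightarrow> F \<subseteq> Sw S0 \<Longrightarrow> \<exists>n. F \<subseteq> Cn S0 n"
  unfolding Sw_def by (rule finite_in_chain) (simp_all add: Cn_mono)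

lemma Sw_one: "t \<in> Sw S0 \<Longrightarrow> \<exists>n. t \<in> Cn S0 n"
  unfolding Sw_def by blast

lemma Cn_Sw: "Cn S0 n \<subseteq> Sw S0"
  unfolding Sw_def by blast

lemma step_Sw: "t \<in> step (Cn S0 n) \<Longrightarrow> t \<in> Sw S0"
  using Cn_Sw[of S0 "Suc n"] unfolding Cn_Suc by blast

lemma Sw_two: "s \<in> Sw S0 \<Longrightarrow> t \<in> Sw S0 \<Longrightarrow> \<exists>n. s \<in> Cn S0 n \<and> t \<in> Cn S0 n"
  using Sw_fin[of "{s, t}" S0] by auto

end


lemma kmod_sub:
  assumes C: "is_klcat C" and M1: "is_kmod C M1"
    and eqa: "act M2 = act M1" and eqs: "msmult M2 = msmult M1"
    and sub: "\<And>A. A \<in> kOb C \<Longrightarrow> carrier M2 A \<subseteq> carrier M1 A"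
    and z: "\<And>A. A \<in> kOb C \<Longrightarrow> 0 \<in> carrier M2 A"
    and ad: "\<And>A x y. A \<in> kOb C \<Longrightarrow> x \<in> carrier M2 A \<Longrightarrow> y \<in> carrier M2 A \<Longrightarrow> x + y \<in> carrier M2 A"
    and ng: "\<And>A x. A \<in> kOb C \<Longrightarrow> x \<in> carrier M2 A \<Longrightarrow> - x \<in> carrier M2 A"
    and ac: "\<And>A A' f x. A \<in> kOb C \<Longrightarrow> A' \<in> kOb C \<Longrightarrow> f \<in> kHom C A A' \<Longrightarrow> x \<in> carrier M2 A' \<Longrightarrow>
              act M2 f x \<in> carrier M2 A"
  shows "is_kmod C M2"
proof -
  have sm: "msmult M2 c x \<in> carrier M2 A" if "A \<in> kOb C" "x \<in> carrier M2 A" for A c x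
  proof -
    have "x \<in> carrier M1 A" using sub that by blast
    then have "act M1 (ksmult C c (kid C A)) x = msmult M1 c x"
      using kmod_smult_act[OF M1 that(1) _ C] by blast
    moreover have "ksmult C c (kid C A) \<in> kHom C A A"
      using klcat_smult[OF C that(1) that(1) klcat_kid[OF C that(1)]] .
    moreover have "act M1 (ksmult C c (kid C A)) x \<in> carrier M2 A"
      using ac[OF that(1) that(1) calculation(2) that(2)] eqa by simp
    ultimately show ?thesis using eqs by simp
  qed
  have sm': "\<And>A c x. A \<in> kOb C \<Longrightarrow> x \<in> carrier M2 A \<Longrightarrow> msmult M1 c x \<in> carrier M2 A"
    using sm eqs by metis
  have sub': "\<And>A x. A \<in> kOb C \<Longrightarrow> x \<in> carrier M2 A \<Longrightarrow> x \<in> carrier M1 A" using sub by blast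
  show ?thesis
    using M1 unfolding is_kmod_def eqa eqs
    apply (intro conjI ballI allI)
    apply (simp_all add: z ad ng sm' ac sub' eqa[symmetric])
    done
qed



lemma phi_upd[simp]: "phi_eval (M\<lparr>qcar := N\<rparr>) u V s = phi_eval M u V s"
  by (simp add: phi_eval_def)

lemma gen3_mem:
  assumes "A \<in> kOb (pcat P U)" "m \<in> carrier Mm A" "f \<in> kHom (pcat P V) B (pobj P u A)"
  shows "(\<lambda>x. fdelta (A, msmult Mm c m, f) x - c * fdelta (A, m, f) x) \<in> tens_gens P u U V Mm B"
  unfolding tens_gens_def
  apply (rule UnI1, rule UnI1, rule UnI2)
  apply (intro CollectI exI conjI, rule refl)
  using assms by simp_all

lemma sum_delta:
  fixes s :: "'a \<Rightarrow> 'k::comm_ring_1"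
  assumes "finite {t. s t \<noteq> 0}"
  shows "s x = (\<Sum>t\<in>{t. s t \<noteq> 0}. s t * fdelta t x)"
proof -
  have "(\<Sum>t\<in>{t. s t \<noteq> 0}. s t * fdelta t x) = (\<Sum>t\<in>{t. s t \<noteq> 0}. if x = t then s t else 0)"
    by (rule sum.cong) (simp_all add: fdelta_def)
  also have "\<dots> = (if x \<in> {t. s t \<noteq> 0} then s x else 0)"
    using sum.delta'[OF assms, of x s] by simp
  also have "\<dots> = s x" by auto
  finally show ?thesis by simp
qed

lemma cnt_map:
  assumes "distinct ts"
  shows "(cnt (map g ts) x :: 'k::comm_ring_1) = (\<Sum>t\<in>set ts. fdelta (g t) x)"
  using assms
proof (induction ts)
  case Nil then show ?case by (simp add: cnt_def)
next
  case (Cons a ts)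
  have "(cnt (map g (a # ts)) x :: 'k) = (if g a = x then 1 else 0) + cnt (map g ts) x"
    by (simp add: cnt_def)
  also have "\<dots> = fdelta (g a) x + (\<Sum>t\<in>set ts. fdelta (g t) x)"
    using Cons by (auto simp: fdelta_def)
  also have "\<dots> = (\<Sum>t\<in>set (a # ts). fdelta (g t) x)" using Cons(2) by simp
  finally show ?case .
qed

lemma kmod_smult_mem: "is_kmod C Mm \<Longrightarrow> A \<in> kOb C \<Longrightarrow> x \<in> carrier Mm A \<Longrightarrow> msmult Mm c x \<in> carrier Mm A"
  by (simp add: is_kmod_def)



context qsetup begin

lemma N_M: "S0 \<subseteq> Mt \<Longrightarrow> x \<in> Nof (Sw S0) U A \<Longrightarrow> x \<in> qcar M U A"
  using Sw_Mt MtD unfolding Nof_def by blast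

lemma kmodN:
  assumes S0M: "S0 \<subseteq> Mt" and U: "U \<in> cOb UC"
  shows "is_kmod (pcat P U) (qmod (M\<lparr>qcar := Nof (Sw S0)\<rparr>) U)"
proof (rule kmod_sub[OF klcatU[OF U] kmodM[OF U]])
  show "act (qmod (M\<lparr>qcar := Nof (Sw S0)\<rparr>) U) = act (qmod M U)" by (simp add: qmod_upd)
  show "msmult (qmod (M\<lparr>qcar := Nof (Sw S0)\<rparr>) U) = msmult (qmod M U)" by (simp add: qmod_upd)
  show "carrier (qmod (M\<lparr>qcar := Nof (Sw S0)\<rparr>) U) A \<subseteq> carrier (qmod M U) A" for A
    using N_M[OF S0M] by (auto simp: qmod_upd)
  show "0 \<in> carrier (qmod (M\<lparr>qcar := Nof (Sw S0)\<rparr>) U) A" if "A \<in> kOb (pcat P U)" for A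
    using step_Sw[OF step_zero[OF U that, of "Cn S0 0"]] by (simp add: qmod_upd Nof_def)
  show "x + y \<in> carrier (qmod (M\<lparr>qcar := Nof (Sw S0)\<rparr>) U) A"
    if "A \<in> kOb (pcat P U)" "x \<in> carrier (qmod (M\<lparr>qcar := Nof (Sw S0)\<rparr>) U) A"
      "y \<in> carrier (qmod (M\<lparr>qcar := Nof (Sw S0)\<rparr>) U) A" for A x y
  proof -
    have "(U, A, x) \<in> Sw S0" "(U, A, y) \<in> Sw S0" using that by (simp_all add: qmod_upd Nof_def)
    then obtain n where "(U, A, x) \<in> Cn S0 n" "(U, A, y) \<in> Cn S0 n" using Sw_two by blast
    then have "(U, A, x + y) \<in> Sw S0" using step_Sw step_add by blast
    then show ?thesis by (simp add: qmod_upd Nof_def)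
  qed
  show "- x \<in> carrier (qmod (M\<lparr>qcar := Nof (Sw S0)\<rparr>) U) A"
    if "A \<in> kOb (pcat P U)" "x \<in> carrier (qmod (M\<lparr>qcar := Nof (Sw S0)\<rparr>) U) A" for A x
  proof -
    have "(U, A, x) \<in> Sw S0" using that by (simp_all add: qmod_upd Nof_def)
    then obtain n where "(U, A, x) \<in> Cn S0 n" using Sw_one by blast
    then have "(U, A, - x) \<in> Sw S0" using step_Sw step_neg by blast
    then show ?thesis by (simp add: qmod_upd Nof_def)
  qed
  show "act (qmod (M\<lparr>qcar := Nof (Sw S0)\<rparr>) U) f x \<in> carrier (qmod (M\<lparr>qcar := Nof (Sw S0)\<rparr>) U) A"
    if "A \<in> kOb (pcat P U)" "A' \<in> kOb (pcat P U)" "f \<in> kHom (pcat P U) A A'"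
      "x \<in> carrier (qmod (M\<lparr>qcar := Nof (Sw S0)\<rparr>) U) A'" for A A' f x
  proof -
    have "(U, A', x) \<in> Sw S0" using that by (simp_all add: qmod_upd Nof_def)
    then obtain n where n: "(U, A', x) \<in> Cn S0 n" using Sw_one by blast
    have "(U, A, A', f) \<in> prestack_mors UC P" using U that unfolding prestack_mors_def by simp
    then have "(U, A, qact M U f x) \<in> Sw S0" using step_Sw step_act n by blast
    then show ?thesis by (simp add: qmod_upd Nof_def)
  qed
qed

lemma psiN:
  assumes S0M: "S0 \<subseteq> Mt" and "U \<in> cOb UC" "V \<in> cOb UC" "u \<in> cHom UC V U"
    and "x \<in> Nof (Sw S0) U A"
  shows "qpsi M u A x \<in> Nof (Sw S0) V (pobj P u A)"
proof -
  have "(U, A, x) \<in> Sw S0" using assms by (simp add: Nof_def)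
  then obtain n where n: "(U, A, x) \<in> Cn S0 n" using Sw_one by blast
  have "(V, U, u) \<in> cat_mors UC" using assms unfolding cat_mors_def by simp
  then show ?thesis using step_Sw step_psi n unfolding Nof_def by blast
qed

lemma surjN:
  assumes S0M: "S0 \<subseteq> Mt" and U: "U \<in> cOb UC" and V: "V \<in> cOb UC" and u: "u \<in> cHom UC V U"
    and B: "B \<in> kOb (pcat P V)" and y: "y \<in> Nof (Sw S0) V B"
  shows "\<exists>s\<in>tens_fsums P u U V (qmod (M\<lparr>qcar := Nof (Sw S0)\<rparr>) U) B.
           phi_eval (M\<lparr>qcar := Nof (Sw S0)\<rparr>) u V s = y"
proof -
  have "(V, B, y) \<in> Sw S0" using y by (simp add: Nof_def)
  then obtain n where n: "(V, B, y) \<in> Cn S0 n" using Sw_one by blast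
  have cm: "(V, U, u) \<in> cat_mors UC" using U V u unfolding cat_mors_def by simp
  have yM: "(V, B, y) \<in> Mt" using n Cn_Mt[OF S0M] by blast
  note sp = sw_spec[OF cm yM]
  let ?s = "sw V U u B y"
  have "{t. ?s t \<noteq> 0} \<subseteq> tens_triples P u U V (qmod (M\<lparr>qcar := Nof (Sw S0)\<rparr>) U) B"
  proof
    fix t assume t: "t \<in> {t. ?s t \<noteq> 0}"
    obtain A m f where tt: "t = (A, m, f)" by (cases t) auto
    have "t \<in> tens_triples P u U V (qmod M U) B" using t sp unfolding tens_fsums_def by blast
    then have A: "A \<in> kOb (pcat P U)" "f \<in> kHom (pcat P V) B (pobj P u A)"
      unfolding tt tens_triples_def by simp_all
    have "(U, A, m) \<in> Sw S0" using step_Sw[OF step_surj[OF cm n]] t tt by simp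
    then show "t \<in> tens_triples P u U V (qmod (M\<lparr>qcar := Nof (Sw S0)\<rparr>) U) B"
      using A unfolding tt tens_triples_def by (simp add: qmod_upd Nof_def)
  qed
  then have "?s \<in> tens_fsums P u U V (qmod (M\<lparr>qcar := Nof (Sw S0)\<rparr>) U) B"
    using sp unfolding tens_fsums_def by blast
  then show ?thesis using sp by auto
qed

end


context qsetup begin

lemma injN:
  assumes S0M: "S0 \<subseteq> Mt" and U: "U \<in> cOb UC" and V: "V \<in> cOb UC" and u: "u \<in> cHom UC V U"
    and B: "B \<in> kOb (pcat P V)"
    and s: "s \<in> tens_fsums P u U V (qmod (M\<lparr>qcar := Nof (Sw S0)\<rparr>) U) B"
    and phi: "phi_eval (M\<lparr>qcar := Nof (Sw S0)\<rparr>) u V s = 0"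
  shows "s \<in> tens_rel P u U V (qmod (M\<lparr>qcar := Nof (Sw S0)\<rparr>) U) B"
proof -
  let ?N = "Nof (Sw S0)"
  let ?M' = "qmod (M\<lparr>qcar := ?N\<rparr>) U"
  define D where "D = {t. s t \<noteq> 0}"
  have finD: "finite D" and DT: "D \<subseteq> tens_triples P u U V ?M' B"
    using s unfolding tens_fsums_def D_def by blast+
  have subNM: "\<And>A. A \<in> kOb (pcat P U) \<Longrightarrow> carrier ?M' A \<subseteq> carrier (qmod M U) A"
    using N_M[OF S0M] by (auto simp: qmod_upd)
  have relsub: "tens_rel P u U V ?M' B \<subseteq> tens_rel P u U V (qmod M U) B"
    by (rule tens_rel_mono) (auto simp: qmod_upd dest: N_M[OF S0M])
  have sM: "s \<in> tens_fsums P u U V (qmod M U) B"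
  proof -
    have "tens_fsums P u U V ?M' B \<subseteq> tens_fsums P u U V (qmod M U) B"
      by (rule tens_fsums_mono) (auto simp: qmod_upd dest: N_M[OF S0M])
    then show ?thesis using s by blast
  qed
  have srel: "s \<in> tens_rel P u U V (qmod M U) B"
    using injM[OF U V u B sM] phi by simp
  define img where "img t = (fst t, qsmult M (s t) (fst (snd t)), snd (snd t))" for t
  have Dinfo: "fst t \<in> kOb (pcat P U) \<and> (U, fst t, fst (snd t)) \<in> Sw S0 \<and>
      snd (snd t) \<in> kHom (pcat P V) B (pobj P u (fst t))" if "t \<in> D" for t
  proof -
    obtain A m f where tt: "t = (A, m, f)" by (cases t) auto
    have "t \<in> tens_triples P u U V ?M' B" using DT that by blast
    then show ?thesis unfolding tt tens_triples_def by (simp add: qmod_upd Nof_def)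
  qed
  have kN: "is_kmod (pcat P U) ?M'" using kmodN[OF S0M U] .
  have Dimg: "(U, fst t, qsmult M (s t) (fst (snd t))) \<in> Sw S0" if "t \<in> D" for t
  proof -
    have "fst (snd t) \<in> carrier ?M' (fst t)" using Dinfo[OF that] by (simp add: qmod_upd Nof_def)
    then have "msmult ?M' (s t) (fst (snd t)) \<in> carrier ?M' (fst t)"
      using kmod_smult_mem[OF kN] Dinfo[OF that] by blast
    then show ?thesis by (simp add: qmod_upd Nof_def)
  qed
  define F0 where "F0 = (\<lambda>t. (U, fst t, fst (snd t))) ` D \<union> (\<lambda>t. (U, fst t, qsmult M (s t) (fst (snd t)))) ` D"
  have "finite F0" "F0 \<subseteq> Sw S0" using finD Dinfo Dimg unfolding F0_def by auto
  then obtain n where n: "F0 \<subseteq> Cn S0 n" using Sw_fin by blast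
  obtain ts where ts: "distinct ts" "set ts = D" using finite_distinct_list[OF finD] by blast
  define xs where "xs = map img ts"
  have cntx: "cnt xs x = (\<Sum>t\<in>D. fdelta (img t) x)" for x
    unfolding xs_def using cnt_map[OF ts(1), of img x] ts(2) by simp
  have sx: "s x = (\<Sum>t\<in>D. s t * fdelta t x)" for x
    using sum_delta[of s x] finD unfolding D_def by simp
  have gen: "(\<lambda>x. fdelta (img t) x - s t * fdelta t x) \<in> tens_gens P u U V ?M' B" if "t \<in> D" for t
  proof -
    obtain A m f where tt: "t = (A, m, f)" by (cases t) auto
    have mem: "m \<in> carrier ?M' A" using Dinfo[OF that] tt by (simp add: qmod_upd Nof_def)
    have A: "A \<in> kOb (pcat P U)" and f: "f \<in> kHom (pcat P V) B (pobj P u A)"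
      using Dinfo[OF that] tt by simp_all
    have "(\<lambda>x. fdelta (A, msmult ?M' (s t) m, f) x - s t * fdelta (A, m, f) x) \<in> tens_gens P u U V ?M' B"
      by (rule gen3_mem[OF A mem f])
    then show ?thesis unfolding img_def tt by (simp add: qmod_upd)
  qed
  have drel: "(\<lambda>x. s x - cnt xs x) \<in> tens_rel P u U V ?M' B"
  proof -
    have "(\<lambda>x. \<Sum>t\<in>D. (-1) * (fdelta (img t) x - s t * fdelta t x)) \<in> kspan (tens_gens P u U V ?M' B)"
      by (rule kspan_sum[OF finD]) (rule kspan.kspan_smult[OF kspan.kspan_gen[OF gen]])
    then show ?thesis unfolding tens_rel_def
    proof (rule kspan_ext)
      fix x
      have "(\<Sum>t\<in>D. (-1) * (fdelta (img t) x - s t * fdelta t x)) =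
            (\<Sum>t\<in>D. s t * fdelta t x) - (\<Sum>t\<in>D. fdelta (img t) x)"
      proof -
        have "(\<Sum>t\<in>D. (-1) * (fdelta (img t) x - s t * fdelta t x)) =
              (\<Sum>t\<in>D. s t * fdelta t x - fdelta (img t) x)"
          by (rule sum.cong) simp_all
        also have "\<dots> = (\<Sum>t\<in>D. s t * fdelta t x) - (\<Sum>t\<in>D. fdelta (img t) x)"
          by (rule sum_subtractf)
        finally show ?thesis .
      qed
      then show "(\<Sum>t\<in>D. (-1) * (fdelta (img t) x - s t * fdelta t x)) = s x - cnt xs x"
        by (subst sx[of x], subst cntx[of x])
    qed
  qed
  have cntM: "cnt xs \<in> tens_rel P u U V (qmod M U) B"
  proof -
    have "(\<lambda>x. s x - (s x - cnt xs x)) \<in> tens_rel P u U V (qmod M U) B"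
      using kspan_diff[of s _ "\<lambda>x. s x - cnt xs x"] srel relsub drel unfolding tens_rel_def by blast
    then show ?thesis unfolding tens_rel_def by (rule kspan_ext) simp
  qed
  have cm: "(V, U, u) \<in> cat_mors UC" using U V u unfolding cat_mors_def by simp
  have xsT: "set xs \<subseteq> tens_triples P u U V (qmod (M\<lparr>qcar := Nof (Cn S0 n)\<rparr>) U) B"
  proof
    fix x assume "x \<in> set xs"
    then obtain t where t: "t \<in> D" "x = img t" unfolding xs_def using ts(2) by auto
    have "(U, fst t, qsmult M (s t) (fst (snd t))) \<in> Cn S0 n" using n t(1) unfolding F0_def by blast
    then show "x \<in> tens_triples P u U V (qmod (M\<lparr>qcar := Nof (Cn S0 n)\<rparr>) U) B"
      using Dinfo[OF t(1)] unfolding t(2) img_def tens_triples_def by (simp add: qmod_upd Nof_def)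
  qed
  have J: "((V, U, u), B, xs) \<in> JS (Cn S0 n)"
    unfolding JS_def using cm B xsT cntM by simp
  note IFs = IF_spec[OF cntM]
  have IFsub: "IF U u V B xs \<subseteq> Sw S0" using step_Sw[OF step_inj[OF J]] by blast
  have "tens_rel P u U V (qmod (M\<lparr>qcar := Nof (IF U u V B xs)\<rparr>) U) B \<subseteq> tens_rel P u U V ?M' B"
    by (rule tens_rel_mono) (use IFsub in \<open>auto simp: qmod_upd Nof_def\<close>)
  then have cntN: "cnt xs \<in> tens_rel P u U V ?M' B" using IFs by blast
  have "(\<lambda>x. (s x - cnt xs x) + cnt xs x) \<in> kspan (tens_gens P u U V ?M' B)"
    using kspan.kspan_add[of "\<lambda>x. s x - cnt xs x" _ "cnt xs"] drel cntN unfolding tens_rel_def by blast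
  then show ?thesis unfolding tens_rel_def by (rule kspan_ext) simp
qed

end


context qsetup begin

lemma psi_add: "U \<in> cOb UC \<Longrightarrow> V \<in> cOb UC \<Longrightarrow> u \<in> cHom UC V U \<Longrightarrow> A \<in> kOb (pcat P U) \<Longrightarrow>
   x \<in> qcar M U A \<Longrightarrow> y \<in> qcar M U A \<Longrightarrow> qpsi M u A (x + y) = qpsi M u A x + qpsi M u A y"
  using Mq by (simp add: is_qch_def)

lemma psi_smult: "U \<in> cOb UC \<Longrightarrow> V \<in> cOb UC \<Longrightarrow> u \<in> cHom UC V U \<Longrightarrow> A \<in> kOb (pcat P U) \<Longrightarrow>
   x \<in> qcar M U A \<Longrightarrow> qpsi M u A (qsmult M c x) = qsmult M c (qpsi M u A x)"
  using Mq by (simp add: is_qch_def)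

lemma psi_nat: "U \<in> cOb UC \<Longrightarrow> V \<in> cOb UC \<Longrightarrow> u \<in> cHom UC V U \<Longrightarrow> A \<in> kOb (pcat P U) \<Longrightarrow>
   A' \<in> kOb (pcat P U) \<Longrightarrow> a \<in> kHom (pcat P U) A A' \<Longrightarrow> x \<in> qcar M U A' \<Longrightarrow>
   qpsi M u A (qact M U a x) = qact M V (pmor P u a) (qpsi M u A' x)"
  using Mq by (simp add: is_qch_def)

lemma twist: "U \<in> cOb UC \<Longrightarrow> V \<in> cOb UC \<Longrightarrow> W \<in> cOb UC \<Longrightarrow> u \<in> cHom UC V U \<Longrightarrow> v \<in> cHom UC W V \<Longrightarrow>
   A \<in> kOb (pcat P U) \<Longrightarrow> x \<in> qcar M U A \<Longrightarrow>
   qpsi M v (pobj P u A) (qpsi M u A x) = qact M W (pc P u v A) (qpsi M (ccomp UC u v) A x)"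
  using Mq by (simp add: is_qch_def)

lemma qchN:
  assumes S0M: "S0 \<subseteq> Mt"
  shows "is_qch UC P (M\<lparr>qcar := Nof (Sw S0)\<rparr>)"
  unfolding is_qch_def
  apply (intro conjI ballI allI)
  apply (simp_all add: kmodN[OF S0M] psiN[OF S0M] N_M[OF S0M] psi_add psi_smult psi_nat twist)
  subgoal for U V u B y using surjN[OF S0M, of U V u B y] by simp
  subgoal for U V u B s using injN[OF S0M, of U V u B s] by simp
  done

end

theorem proposition4p16:
  fixes UC :: "('u, 'f) smallcat"
    and P :: "('u, 'f, 'o, 'h::ab_group_add, 'k::comm_ring_1) prestack"
    and M :: "('u, 'f, 'o, 'h, 'm::ab_group_add, 'k) qmodule"
    and K :: "'c set"
    and X :: "'u \<Rightarrow> 'o \<Rightarrow> 'm set"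
  assumes prestack: "is_prestack UC P"
    and geometric: "is_geometric TYPE('m) UC P"
    and kappa_aleph0: "cardle (UNIV :: nat set) K"
    and kappa_U: "cardle (cat_mors UC) K"
    and kappa_A: "cardle (prestack_mors UC P) K"
    and M_qch: "is_qch UC P M"
    and X_sub: "\<forall>U\<in>cOb UC. \<forall>A\<in>kOb (pcat P U). X U A \<subseteq> qcar M U A"
    and X_card: "cardle (fam_elems UC P X) K"
  shows "\<exists>N :: 'u \<Rightarrow> 'o \<Rightarrow> 'm set.
           (\<forall>U\<in>cOb UC. \<forall>A\<in>kOb (pcat P U). X U A \<subseteq> N U A \<and> N U A \<subseteq> qcar M U A) \<and>
           is_qch UC P (M\<lparr>qcar := N\<rparr>) \<and>
           cardle (fam_elems UC P N) K"
proof -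
  have Kinf: "infinite K"
    using card_of_ordLeq_infinite[OF kappa_aleph0] infinite_UNIV_nat by blast
  interpret q: qsetup UC P M K
    using prestack M_qch Kinf kappa_U kappa_A by unfold_locales
  define S0 where "S0 = fam_elems UC P X"
  have S0M: "S0 \<subseteq> q.Mt"
    using X_sub unfolding S0_def fam_elems_def q.Mt_def by auto
  have S0K: "cardle S0 K" using X_card unfolding S0_def .
  have part1: "\<forall>U\<in>cOb UC. \<forall>A\<in>kOb (pcat P U). X U A \<subseteq> Nof (q.Sw S0) U A \<and> Nof (q.Sw S0) U A \<subseteq> qcar M U A"
  proof (intro ballI conjI)
    fix U A assume U: "U \<in> cOb UC" and A: "A \<in> kOb (pcat P U)"
    show "X U A \<subseteq> Nof (q.Sw S0) U A"
    proof
      fix x assume "x \<in> X U A"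
      then have "(U, A, x) \<in> S0" using U A unfolding S0_def fam_elems_def by simp
      then show "x \<in> Nof (q.Sw S0) U A" using q.S0_Sw unfolding Nof_def by blast
    qed
    show "Nof (q.Sw S0) U A \<subseteq> qcar M U A" using q.N_M[OF S0M] by blast
  qed
  have part2: "is_qch UC P (M\<lparr>qcar := Nof (q.Sw S0)\<rparr>)" using q.qchN[OF S0M] .
  have "fam_elems UC P (Nof (q.Sw S0)) \<subseteq> q.Sw S0"
    unfolding fam_elems_def Nof_def by auto
  then have part3: "cardle (fam_elems UC P (Nof (q.Sw S0))) K"
    using cle_mono q.Sw_card[OF S0M S0K] by blast
  show ?thesis using part1 part2 part3 by blast
qed

end
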